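(* Let $(\mathsf K,\mathsf D)$ be a differential ring with a ring automorphism $a\mapsto a\circ\lambda$ and a central unit $\lambda'$ with all $\mathsf D^j(\lambda')$ central, satisfying $\mathsf D(a\circ\lambda)=\lambda'(\mathsf Da)\circ\lambda$; write $\lambda''=\mathsf D(\lambda')$, $\lambda'''=\mathsf D^2(\lambda')$, $\sigma=(\lambda')^{-1}$, and $$S(\lambda)=\frac{\lambda'''}{\lambda'}-\frac32\Bigl(\frac{\lambda''}{\lambda'}\Bigr)^2,\quad S'(\lambda)=\mathsf D(S(\lambda)),\quad S''(\lambda)=\mathsf D^2(S(\lambda)).$$ Let $L=\sum_{i=0}^n\binom ni a_i\mathsf D^{n-i}$ ($a_0=1$), and let $\widehat L^\lambda:=\sigma^{-n}\sum_{i=0}^n\binom ni(a_i\circ\lambda)(\sigma\mathsf D)^{n-i}$, a monic operator with gauge–Wilczynski covariants $I_k^\lambda$. Then, for $n\ge2$, $$I_2^\lambda=(\lambda')^2(I_2\circ\lambda)+\frac{n+1}{6}S(\lambda);$$ for $n\ge3$, $$I_3^\lambda=(\lambda')^3(I_3\circ\lambda)+3\lambda'\lambda''(I_2\circ\lambda)+\frac{n+1}{4}S'(\lambda);$$ and for $n\ge4$, $$I_4^\lambda=(\lambda')^4(I_4\circ\lambda)+6(\lambda')^2\lambda''(I_3\circ\lambda)+\Bigl((n+5)\lambda'\lambda'''-\frac32(n-1)(\lambda'')^2\Bigr)(I_2\circ\lambda)+\frac{3(n+1)}{10}S''(\lambda)+\frac{(n+1)(5n+7)}{60}S(\lambda)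^2.$$
   Context: $\mathsf K$ is a unital associative (possibly noncommutative) ring with derivation $\mathsf D$; $\mathsf K\langle\mathsf D\rangle$ is the Ore algebra with coefficients on the left and $\mathsf D a=a\mathsf D+\mathsf D(a)$. For a monic operator $M=\sum_k\binom nk b_k\mathsf D^{n-k}$ ($b_0=1$), $I_k(M)$ are the unique elements with $M=(\mathsf D+b_1)^n+\sum_{k=2}^n\binom nk I_k(M)(\mathsf D+b_1)^{n-k}$; $I_k$ without superscript means $I_k(L)$. *)

theory Defs
  imports Main
begin

text \<open>Differential operators over a (possibly noncommutative) ring: an element
  of K<D> is represented by its left coefficient function c, meaning
  the sum over m of (c m) D^m (finite support).\<close>

definition rinv :: "'a::ring_1 \<Rightarrow> 'a" where
  "rinv x = (THE y. x * y = 1 \<and> y * x = 1)"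

definition is_derivation :: "('a::ring_1 \<Rightarrow> 'a) \<Rightarrow> bool" where
  "is_derivation Dr \<longleftrightarrow> (\<forall>x y. Dr (x + y) = Dr x + Dr y) \<and>
                          (\<forall>x y. Dr (x * y) = Dr x * y + x * Dr y)"

definition is_ring_automorphism :: "('a::ring_1 \<Rightarrow> 'a) \<Rightarrow> bool" where
  "is_ring_automorphism f \<longleftrightarrow> bij f \<and> (\<forall>x y. f (x + y) = f x + f y) \<and>
                          (\<forall>x y. f (x * y) = f x * f y) \<and> f 1 = 1"

definition central :: "'a::ring_1 \<Rightarrow> bool" where
  "central c \<longleftrightarrow> (\<forall>x. c * x = x * c)"

definition is_unit_ring :: "'a::ring_1 \<Rightarrow> bool" where
  "is_unit_ring c \<longleftrightarrow> (\<exists>y. c * y = 1 \<and> y * c = 1)"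

definition op_one :: "nat \<Rightarrow> 'a::ring_1" where
  "op_one m = (if m = 0 then 1 else 0)"

text \<open>Left multiplication by the first order operator c D + b:
  (c D + b) (sum q_j D^j), using D q = q D + D(q).\<close>
definition op_mul1 :: "('a::ring_1 \<Rightarrow> 'a) \<Rightarrow> 'a \<Rightarrow> 'a \<Rightarrow> (nat \<Rightarrow> 'a) \<Rightarrow> (nat \<Rightarrow> 'a)" where
  "op_mul1 Dr c b Q m = c * ((if m = 0 then 0 else Q (m - 1)) + Dr (Q m)) + b * Q m"

definition op_pow1 :: "('a::ring_1 \<Rightarrow> 'a) \<Rightarrow> 'a \<Rightarrow> 'a \<Rightarrow> nat \<Rightarrow> (nat \<Rightarrow> 'a)" where
  "op_pow1 Dr c b k = (op_mul1 Dr c b ^^ k) op_one"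

text \<open>L = sum_i (n choose i) a_i D^(n-i).\<close>
definition op_L :: "nat \<Rightarrow> (nat \<Rightarrow> 'a::ring_1) \<Rightarrow> (nat \<Rightarrow> 'a)" where
  "op_L n a m = (if m \<le> n then of_nat (n choose (n - m)) * a (n - m) else 0)"

text \<open>Gauge-Wilczynski covariants I_k(M) of a monic operator M of order n:
  the unique I_2,...,I_n with
  M = (D+b_1)^n + sum_{k=2}^n (n choose k) I_k (D+b_1)^(n-k),
  where the coefficient of D^(n-1) in M is n b_1.
  (I k is normalised to 0 outside 2..n.)\<close>
definition wilczynski :: "('a::ring_1 \<Rightarrow> 'a) \<Rightarrow> nat \<Rightarrow> (nat \<Rightarrow> 'a) \<Rightarrow> nat \<Rightarrow> 'a" where
  "wilczynski Dr n M =
     (let b1 = rinv (of_nat n) * M (n - 1) in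
      THE I. (\<forall>k. k \<notin> {2..n} \<longrightarrow> I k = 0) \<and>
        (\<forall>m. M m = op_pow1 Dr 1 b1 n m +
               (\<Sum>k=2..n. of_nat (n choose k) * I k * op_pow1 Dr 1 b1 (n - k) m)))"

text \<open>hat L^lambda = sigma^(-n) sum_i (n choose i) (a_i o lambda) (sigma D)^(n-i),
  with sigma = (lambda')^(-1), so sigma^(-n) = (lambda')^n (central).\<close>
definition op_Lhat :: "('a::ring_1 \<Rightarrow> 'a) \<Rightarrow> ('a \<Rightarrow> 'a) \<Rightarrow> 'a \<Rightarrow> nat \<Rightarrow> (nat \<Rightarrow> 'a) \<Rightarrow> (nat \<Rightarrow> 'a)" where
  "op_Lhat Dr lam lp n a m =
     (\<Sum>i=0..n. lp ^ n * of_nat (n choose i) * lam (a i) * op_pow1 Dr (rinv lp) 0 (n - i) m)"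

definition schwarzian :: "('a::ring_1 \<Rightarrow> 'a) \<Rightarrow> 'a \<Rightarrow> 'a" where
  "schwarzian Dr lp = Dr (Dr lp) * rinv lp
      - of_nat 3 * rinv (of_nat 2) * (Dr lp * rinv lp) ^ 2"

end

theory Submission
  imports Defs "HOL-Computational_Algebra.Polynomial"
begin

lemma central_0[simp]: "central 0" and central_1[simp]: "central 1"
  by (simp_all add: central_def)
lemma central_add[simp]: "central x \<Longrightarrow> central y \<Longrightarrow> central (x + y)"
  by (simp add: central_def distrib_left distrib_right)
lemma central_mult[simp]: assumes "central x" "central y" shows "central (x * y)"
  unfolding central_def
proof
  fix z
  have cx: "x * z = z * x" and cy: "y * z = z * y" using assms unfolding central_def by blast+
  have "x * y * z = x * (y * z)" by (rule mult.assoc)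
  also have "\<dots> = x * (z * y)" by (simp only: cy)
  also have "\<dots> = (x * z) * y" by (rule mult.assoc[symmetric])
  also have "\<dots> = (z * x) * y" by (simp only: cx)
  also have "\<dots> = z * (x * y)" by (rule mult.assoc)
  finally show "x * y * z = z * (x * y)" .
qed
lemma central_uminus[simp]: "central x \<Longrightarrow> central (- x)"
  by (simp add: central_def)
lemma central_diff[simp]: "central x \<Longrightarrow> central y \<Longrightarrow> central (x - y)"
  by (simp add: central_def algebra_simps)
lemma central_of_nat[simp]: "central (of_nat n)"
  by (simp add: central_def mult_of_nat_commute)
lemma central_numeral[simp]: "central (numeral k)"
  using central_of_nat[of "numeral k"] by simp
lemma central_of_int[simp]: "central (of_int n)"
  by (simp add: central_def mult_of_int_commute)
lemma central_power[simp]: "central x \<Longrightarrow> central (x ^ n)"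
  by (induct n) simp_all

definition chom :: "('c::comm_ring_1 \<Rightarrow> 'a::ring_1) \<Rightarrow> bool" where
  "chom f \<longleftrightarrow> (\<forall>x y. f (x + y) = f x + f y) \<and> (\<forall>x y. f (x * y) = f x * f y) \<and> f 1 = 1
     \<and> (\<forall>x. central (f x))"

definition ev :: "('c::comm_ring_1 \<Rightarrow> 'a::ring_1) \<Rightarrow> 'a \<Rightarrow> 'c poly \<Rightarrow> 'a" where
  "ev f x p = fold_coeffs (\<lambda>a s. f a + x * s) p 0"

lemma chom_add: "chom f \<Longrightarrow> f (x + y) = f x + f y" by (simp add: chom_def)
lemma chom_mult: "chom f \<Longrightarrow> f (x * y) = f x * f y" by (simp add: chom_def)
lemma chom_one: "chom f \<Longrightarrow> f 1 = 1" by (simp add: chom_def)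
lemma chom_central: "chom f \<Longrightarrow> central (f x)" by (simp add: chom_def)
lemma chom_zero: "chom f \<Longrightarrow> f 0 = 0"
  using chom_add[of f 0 0] by simp
lemma chom_uminus: "chom f \<Longrightarrow> f (- x) = - f x"
  using chom_add[of f x "- x"] chom_zero[of f] by (metis add.commute neg_eq_iff_add_eq_0)
lemma chom_diff: "chom f \<Longrightarrow> f (x - y) = f x - f y"
  using chom_add[of f x "- y"] chom_uminus[of f y] by simp
lemma chom_power: "chom f \<Longrightarrow> f (x ^ n) = f x ^ n"
  by (induct n) (simp_all add: chom_one chom_mult)
lemma chom_of_nat: "chom f \<Longrightarrow> f (of_nat n) = of_nat n"
  by (induct n) (simp_all add: chom_one chom_add chom_zero)
lemma chom_numeral: "chom f \<Longrightarrow> f (numeral k) = numeral k"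
  using chom_of_nat[of f "numeral k"] by simp

lemma ev_0: "ev f x 0 = 0" by (simp add: ev_def)
lemma ev_pCons: "chom f \<Longrightarrow> ev f x (pCons a p) = f a + x * ev f x p"
proof (cases "p = 0 \<and> a = 0")
  case True
  assume "chom f" then show ?thesis using True by (simp add: ev_def chom_zero)
next
  case False
  then show ?thesis by (auto simp add: ev_def)
qed

lemma ev_add: assumes hf: "chom f" shows "ev f x (p + q) = ev f x p + ev f x q"
proof (induction p arbitrary: q)
  case 0 then show ?case by (simp add: ev_0)
next
  case (pCons a p)
  note IH = pCons.IH
  show ?case
  proof (cases q rule: pCons_cases)
    case (pCons b q')
    have "ev f x (pCons a p + pCons b q') = ev f x (pCons (a+b) (p+q'))" by simp
    also have "\<dots> = f (a+b) + x * ev f x (p + q')" by (rule ev_pCons[OF hf])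
    also have "\<dots> = (f a + x * ev f x p) + (f b + x * ev f x q')"
      by (simp only: IH chom_add[OF hf] distrib_left) (simp only: add_ac)
    also have "\<dots> = ev f x (pCons a p) + ev f x (pCons b q')" by (simp only: ev_pCons[OF hf])
    finally show ?thesis using pCons by (simp only:)
  qed
qed

lemma ev_smult: assumes hf: "chom f" and hx: "central x"
  shows "ev f x (smult a q) = f a * ev f x q"
proof (induction q)
  case 0 then show ?case by (simp add: ev_0)
next
  case (pCons b q)
  have "ev f x (smult a (pCons b q)) = f (a * b) + x * (f a * ev f x q)"
    by (simp only: smult_pCons ev_pCons[OF hf] pCons)
  also have "\<dots> = f a * f b + f a * (x * ev f x q)"
  proof -
    have c: "x * f a = f a * x" using hx unfolding central_def by blast
    have "x * (f a * ev f x q) = f a * (x * ev f x q)"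
      by (simp only: mult.assoc[symmetric] c)
    then show ?thesis by (simp only: chom_mult[OF hf])
  qed
  also have "\<dots> = f a * ev f x (pCons b q)" by (simp add: ev_pCons[OF hf] distrib_left)
  finally show ?case .
qed

lemma ev_mult: assumes hf: "chom f" and hx: "central x"
  shows "ev f x (p * q) = ev f x p * ev f x q"
proof (induction p)
  case 0 then show ?case by (simp add: ev_0)
next
  case (pCons a p)
  have "ev f x (pCons a p * q) = f a * ev f x q + x * (ev f x p * ev f x q)"
    by (simp only: mult_pCons_left ev_add[OF hf] ev_smult[OF hf hx] ev_pCons[OF hf] chom_zero[OF hf]
       pCons add_0_left)
  also have "\<dots> = ev f x (pCons a p) * ev f x q"
    by (simp only: ev_pCons[OF hf] distrib_right mult.assoc)
  finally show ?case .
qed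

lemma ev_central: "chom f \<Longrightarrow> central x \<Longrightarrow> central (ev f x p)"
  by (induction p) (simp_all add: ev_0 ev_pCons chom_central)

lemma chom_ev: "chom f \<Longrightarrow> central x \<Longrightarrow> chom (ev f x)"
  unfolding chom_def[of "ev f x"]
  by (simp add: ev_add ev_mult ev_central one_pCons ev_pCons ev_0 chom_one)

lemma ev_const: "chom f \<Longrightarrow> ev f x [:c:] = f c"
  by (simp add: ev_pCons ev_0)
lemma ev_var: "chom f \<Longrightarrow> ev f x [:0,1:] = x"
  by (simp add: ev_pCons ev_0 chom_zero chom_one)

lemma chom_of_int: "chom (of_int :: int \<Rightarrow> 'a::ring_1)"
  by (simp add: chom_def)

type_synonym PK = "int poly poly poly poly poly poly poly poly poly poly poly poly"

definition W1 :: PK where "W1 = [:[:[:[:[:[:[:[:[:[:[:[:0,1:]:]:]:]:]:]:]:]:]:]:]:]"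
definition W2 :: PK where "W2 = [:[:[:[:[:[:[:[:[:[:[:0,1:]:]:]:]:]:]:]:]:]:]:]"
definition W3 :: PK where "W3 = [:[:[:[:[:[:[:[:[:[:0,1:]:]:]:]:]:]:]:]:]:]"
definition W4 :: PK where "W4 = [:[:[:[:[:[:[:[:[:0,1:]:]:]:]:]:]:]:]:]"
definition W5 :: PK where "W5 = [:[:[:[:[:[:[:[:0,1:]:]:]:]:]:]:]:]"
definition W6 :: PK where "W6 = [:[:[:[:[:[:[:0,1:]:]:]:]:]:]:]"
definition W7 :: PK where "W7 = [:[:[:[:[:[:0,1:]:]:]:]:]:]"
definition W8 :: PK where "W8 = [:[:[:[:[:0,1:]:]:]:]:]"
definition W9 :: PK where "W9 = [:[:[:[:0,1:]:]:]:]"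
definition W10 :: PK where "W10 = [:[:[:0,1:]:]:]"
definition W11 :: PK where "W11 = [:[:0,1:]:]"
definition W12 :: PK where "W12 = [:0,1:]"

definition TRK :: "'a::ring_1 \<Rightarrow> 'a \<Rightarrow> 'a \<Rightarrow> 'a \<Rightarrow> 'a \<Rightarrow> 'a \<Rightarrow> 'a \<Rightarrow> 'a \<Rightarrow> 'a \<Rightarrow> 'a \<Rightarrow> 'a \<Rightarrow> 'a \<Rightarrow> PK \<Rightarrow> 'a" where "TRK x1 x2 x3 x4 x5 x6 x7 x8 x9 x10 x11 x12 = ev (ev (ev (ev (ev (ev (ev (ev (ev (ev (ev (ev (of_int) x1) x2) x3) x4) x5) x6) x7) x8) x9) x10) x11) x12"

lemma transferK:
  fixes x1 x2 x3 x4 x5 x6 x7 x8 x9 x10 x11 x12 :: "'a::ring_1"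
  assumes "central x1" "central x2" "central x3" "central x4" "central x5" "central x6" "central x7" "central x8" "central x9" "central x10" "central x11" "central x12"
  shows "chom (TRK x1 x2 x3 x4 x5 x6 x7 x8 x9 x10 x11 x12)" "TRK x1 x2 x3 x4 x5 x6 x7 x8 x9 x10 x11 x12 W1 = x1" "TRK x1 x2 x3 x4 x5 x6 x7 x8 x9 x10 x11 x12 W2 = x2" "TRK x1 x2 x3 x4 x5 x6 x7 x8 x9 x10 x11 x12 W3 = x3" "TRK x1 x2 x3 x4 x5 x6 x7 x8 x9 x10 x11 x12 W4 = x4" "TRK x1 x2 x3 x4 x5 x6 x7 x8 x9 x10 x11 x12 W5 = x5" "TRK x1 x2 x3 x4 x5 x6 x7 x8 x9 x10 x11 x12 W6 = x6" "TRK x1 x2 x3 x4 x5 x6 x7 x8 x9 x10 x11 x12 W7 = x7" "TRK x1 x2 x3 x4 x5 x6 x7 x8 x9 x10 x11 x12 W8 = x8" "TRK x1 x2 x3 x4 x5 x6 x7 x8 x9 x10 x11 x12 W9 = x9" "TRK x1 x2 x3 x4 x5 x6 x7 x8 x9 x10 x11 x12 W10 = x10" "TRK x1 x2 x3 x4 x5 x6 x7 x8 x9 x10 x11 x12 W11 = x11" "TRK x1 x2 x3 x4 x5 x6 x7 x8 x9 x10 x11 x12 W12 = x12"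
proof -
  define f0 where "f0 = (of_int :: int \<Rightarrow> 'a)"
  have c0: "chom f0" unfolding f0_def by (rule chom_of_int)
  define f1 where "f1 = ev f0 x1"
  have c1: "chom f1" unfolding f1_def by (rule chom_ev[OF c0 assms(1)])
  have k1: "\<And>c. f1 [:c:] = f0 c" "f1 [:0,1:] = x1" unfolding f1_def by (rule ev_const[OF c0], rule ev_var[OF c0])
  define f2 where "f2 = ev f1 x2"
  have c2: "chom f2" unfolding f2_def by (rule chom_ev[OF c1 assms(2)])
  have k2: "\<And>c. f2 [:c:] = f1 c" "f2 [:0,1:] = x2" unfolding f2_def by (rule ev_const[OF c1], rule ev_var[OF c1])
  define f3 where "f3 = ev f2 x3"
  have c3: "chom f3" unfolding f3_def by (rule chom_ev[OF c2 assms(3)])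
  have k3: "\<And>c. f3 [:c:] = f2 c" "f3 [:0,1:] = x3" unfolding f3_def by (rule ev_const[OF c2], rule ev_var[OF c2])
  define f4 where "f4 = ev f3 x4"
  have c4: "chom f4" unfolding f4_def by (rule chom_ev[OF c3 assms(4)])
  have k4: "\<And>c. f4 [:c:] = f3 c" "f4 [:0,1:] = x4" unfolding f4_def by (rule ev_const[OF c3], rule ev_var[OF c3])
  define f5 where "f5 = ev f4 x5"
  have c5: "chom f5" unfolding f5_def by (rule chom_ev[OF c4 assms(5)])
  have k5: "\<And>c. f5 [:c:] = f4 c" "f5 [:0,1:] = x5" unfolding f5_def by (rule ev_const[OF c4], rule ev_var[OF c4])
  define f6 where "f6 = ev f5 x6"
  have c6: "chom f6" unfolding f6_def by (rule chom_ev[OF c5 assms(6)])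
  have k6: "\<And>c. f6 [:c:] = f5 c" "f6 [:0,1:] = x6" unfolding f6_def by (rule ev_const[OF c5], rule ev_var[OF c5])
  define f7 where "f7 = ev f6 x7"
  have c7: "chom f7" unfolding f7_def by (rule chom_ev[OF c6 assms(7)])
  have k7: "\<And>c. f7 [:c:] = f6 c" "f7 [:0,1:] = x7" unfolding f7_def by (rule ev_const[OF c6], rule ev_var[OF c6])
  define f8 where "f8 = ev f7 x8"
  have c8: "chom f8" unfolding f8_def by (rule chom_ev[OF c7 assms(8)])
  have k8: "\<And>c. f8 [:c:] = f7 c" "f8 [:0,1:] = x8" unfolding f8_def by (rule ev_const[OF c7], rule ev_var[OF c7])
  define f9 where "f9 = ev f8 x9"
  have c9: "chom f9" unfolding f9_def by (rule chom_ev[OF c8 assms(9)])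
  have k9: "\<And>c. f9 [:c:] = f8 c" "f9 [:0,1:] = x9" unfolding f9_def by (rule ev_const[OF c8], rule ev_var[OF c8])
  define f10 where "f10 = ev f9 x10"
  have c10: "chom f10" unfolding f10_def by (rule chom_ev[OF c9 assms(10)])
  have k10: "\<And>c. f10 [:c:] = f9 c" "f10 [:0,1:] = x10" unfolding f10_def by (rule ev_const[OF c9], rule ev_var[OF c9])
  define f11 where "f11 = ev f10 x11"
  have c11: "chom f11" unfolding f11_def by (rule chom_ev[OF c10 assms(11)])
  have k11: "\<And>c. f11 [:c:] = f10 c" "f11 [:0,1:] = x11" unfolding f11_def by (rule ev_const[OF c10], rule ev_var[OF c10])
  define f12 where "f12 = ev f11 x12"
  have c12: "chom f12" unfolding f12_def by (rule chom_ev[OF c11 assms(12)])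
  have k12: "\<And>c. f12 [:c:] = f11 c" "f12 [:0,1:] = x12" unfolding f12_def by (rule ev_const[OF c11], rule ev_var[OF c11])
  have TRf: "TRK x1 x2 x3 x4 x5 x6 x7 x8 x9 x10 x11 x12 = f12" unfolding TRK_def f12_def f11_def f10_def f9_def f8_def f7_def f6_def f5_def f4_def f3_def f2_def f1_def f0_def ..
  show "chom (TRK x1 x2 x3 x4 x5 x6 x7 x8 x9 x10 x11 x12)" unfolding TRf by (rule c12)
  show "TRK x1 x2 x3 x4 x5 x6 x7 x8 x9 x10 x11 x12 W1 = x1" unfolding TRf W1_def k12(1) k11(1) k10(1) k9(1) k8(1) k7(1) k6(1) k5(1) k4(1) k3(1) k2(1) k1(2) ..
  show "TRK x1 x2 x3 x4 x5 x6 x7 x8 x9 x10 x11 x12 W2 = x2" unfolding TRf W2_def k12(1) k11(1) k10(1) k9(1) k8(1) k7(1) k6(1) k5(1) k4(1) k3(1) k2(2) ..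
  show "TRK x1 x2 x3 x4 x5 x6 x7 x8 x9 x10 x11 x12 W3 = x3" unfolding TRf W3_def k12(1) k11(1) k10(1) k9(1) k8(1) k7(1) k6(1) k5(1) k4(1) k3(2) ..
  show "TRK x1 x2 x3 x4 x5 x6 x7 x8 x9 x10 x11 x12 W4 = x4" unfolding TRf W4_def k12(1) k11(1) k10(1) k9(1) k8(1) k7(1) k6(1) k5(1) k4(2) ..
  show "TRK x1 x2 x3 x4 x5 x6 x7 x8 x9 x10 x11 x12 W5 = x5" unfolding TRf W5_def k12(1) k11(1) k10(1) k9(1) k8(1) k7(1) k6(1) k5(2) ..
  show "TRK x1 x2 x3 x4 x5 x6 x7 x8 x9 x10 x11 x12 W6 = x6" unfolding TRf W6_def k12(1) k11(1) k10(1) k9(1) k8(1) k7(1) k6(2) ..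
  show "TRK x1 x2 x3 x4 x5 x6 x7 x8 x9 x10 x11 x12 W7 = x7" unfolding TRf W7_def k12(1) k11(1) k10(1) k9(1) k8(1) k7(2) ..
  show "TRK x1 x2 x3 x4 x5 x6 x7 x8 x9 x10 x11 x12 W8 = x8" unfolding TRf W8_def k12(1) k11(1) k10(1) k9(1) k8(2) ..
  show "TRK x1 x2 x3 x4 x5 x6 x7 x8 x9 x10 x11 x12 W9 = x9" unfolding TRf W9_def k12(1) k11(1) k10(1) k9(2) ..
  show "TRK x1 x2 x3 x4 x5 x6 x7 x8 x9 x10 x11 x12 W10 = x10" unfolding TRf W10_def k12(1) k11(1) k10(2) ..
  show "TRK x1 x2 x3 x4 x5 x6 x7 x8 x9 x10 x11 x12 W11 = x11" unfolding TRf W11_def k12(1) k11(2) ..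
  show "TRK x1 x2 x3 x4 x5 x6 x7 x8 x9 x10 x11 x12 W12 = x12" unfolding TRf W12_def  k12(2) ..
qed

lemma chom_fold:
  fixes \<Phi> :: "'c::comm_ring_1 \<Rightarrow> 'a::ring_1"
  assumes "chom \<Phi>"
  shows "\<Phi> a + \<Phi> b = \<Phi> (a + b)" "\<Phi> a * \<Phi> b = \<Phi> (a * b)" "\<Phi> a - \<Phi> b = \<Phi> (a - b)"
    "- \<Phi> a = \<Phi> (- a)" "\<Phi> a ^ n = \<Phi> (a ^ n)"
    "(numeral k :: 'a) = \<Phi> (numeral k)" "(1::'a) = \<Phi> 1" "(0::'a) = \<Phi> 0"
    "(of_nat m :: 'a) = \<Phi> (of_nat m)"
  using assms by (simp_all add: chom_add chom_mult chom_diff chom_uminus chom_power chom_numeral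
      chom_one chom_zero chom_of_nat)

lemma der_rules:
  fixes Dr :: "'a::ring_1 \<Rightarrow> 'a"
  assumes "is_derivation Dr"
  shows "Dr (x + y) = Dr x + Dr y" "Dr (x * y) = Dr x * y + x * Dr y" "Dr 0 = 0" "Dr 1 = 0"
    "Dr (- x) = - Dr x" "Dr (x - y) = Dr x - Dr y" "Dr (numeral k) = 0" "Dr (of_nat n) = 0"
proof -
  have a: "\<And>x y. Dr (x + y) = Dr x + Dr y" and m: "\<And>x y. Dr (x * y) = Dr x * y + x * Dr y"
    using assms unfolding is_derivation_def by blast+
  show "Dr (x + y) = Dr x + Dr y" "Dr (x * y) = Dr x * y + x * Dr y" by (rule a, rule m)
  have z: "Dr 0 = 0" using a[of 0 0] by simp
  have o: "Dr 1 = 0" using m[of 1 1] by simp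
  have u: "\<And>w. Dr (- w) = - Dr w"
  proof -
    fix w have "Dr w + Dr (- w) = 0" using a[of w "- w"] z by simp
    then show "Dr (- w) = - Dr w" by (metis add.commute neg_eq_iff_add_eq_0)
  qed
  show "Dr 0 = 0" "Dr 1 = 0" "Dr (- x) = - Dr x" by (rule z, rule o, rule u)
  show "Dr (x - y) = Dr x - Dr y" using a[of x "- y"] u[of y] by simp
  have n: "\<And>n. Dr (of_nat n) = 0"
  proof -
    fix n show "Dr (of_nat n) = 0" by (induct n) (simp_all add: z o a)
  qed
  show "Dr (of_nat n) = 0" by (rule n)
  show "Dr (numeral k) = 0" using n[of "numeral k"] by simp
qed

section \<open>Units\<close>

lemma rinv_unit:
  assumes "is_unit_ring (x::'a::ring_1)"
  shows "x * rinv x = 1" "rinv x * x = 1"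
proof -
  obtain y where y: "x * y = 1" "y * x = 1" using assms unfolding is_unit_ring_def by blast
  have "rinv x = y" unfolding rinv_def
  proof (rule the_equality)
    show "x * y = 1 \<and> y * x = 1" using y by simp
    fix z assume z: "x * z = 1 \<and> z * x = 1"
    have "z = z * (x * y)" using y by simp
    also have "\<dots> = (z * x) * y" by (simp add: mult.assoc)
    also have "\<dots> = y" using z by simp
    finally show "z = y" .
  qed
  then show "x * rinv x = 1" "rinv x * x = 1" using y by simp_all
qed

lemma central_rinv:
  assumes c: "central x" and u: "is_unit_ring x"
  shows "central (rinv x)"
  unfolding central_def
proof
  fix z
  have cz: "x * z = z * x" using c unfolding central_def by blast
  have "rinv x * z = rinv x * z * (x * rinv x)" using rinv_unit[OF u] by simp
  also have "\<dots> = rinv x * (x * z) * rinv x" by (simp add: mult.assoc cz)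
  also have "\<dots> = (rinv x * x) * z * rinv x" by (simp add: mult.assoc)
  also have "\<dots> = z * rinv x" using rinv_unit[OF u] by simp
  finally show "rinv x * z = z * rinv x" .
qed

lemma central_comm: "central x \<Longrightarrow> x * y = y * x"
  by (simp add: central_def)

lemma unit_cancel_left:
  assumes u: "is_unit_ring x" and e: "x * a = x * b" shows "a = b"
proof -
  have "rinv x * (x * a) = rinv x * (x * b)" using e by simp
  then show ?thesis by (simp add: mult.assoc[symmetric] rinv_unit[OF u])
qed

lemma rinv_mult_cancel: "is_unit_ring x \<Longrightarrow> x * (rinv x * a) = a"
  by (simp add: mult.assoc[symmetric] rinv_unit)
lemma rinv_mult_cancel2: "is_unit_ring x \<Longrightarrow> rinv x * (x * a) = a"
  by (simp add: mult.assoc[symmetric] rinv_unit)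

lemma der_central:
  assumes D: "is_derivation Dr" and c: "central x" shows "central (Dr x)"
  unfolding central_def
proof
  fix z
  have cz: "x * z = z * x" and cdz: "x * Dr z = Dr z * x" using c unfolding central_def by blast+
  have "Dr (x * z) = Dr (z * x)" by (simp add: cz)
  then have "Dr x * z + x * Dr z = Dr z * x + z * Dr x" by (simp add: der_rules[OF D])
  then show "Dr x * z = z * Dr x" by (simp add: cdz)
qed

section \<open>Powers of first order operators\<close>

lemma op_pow1_0: "op_pow1 X c e 0 = op_one" by (simp add: op_pow1_def)
lemma op_pow1_Suc: "op_pow1 X c e (Suc j) = op_mul1 X c e (op_pow1 X c e j)"
  by (simp add: op_pow1_def)

lemma op_pow1_above:
  assumes X0: "X 0 = 0" shows "j < m \<Longrightarrow> op_pow1 X c e j m = 0"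
proof (induction j arbitrary: m)
  case 0 then show ?case by (simp add: op_pow1_0 op_one_def)
next
  case (Suc j)
  then have "op_pow1 X c e j (m - 1) = 0" "op_pow1 X c e j m = 0" by auto
  with Suc.prems show ?case by (simp add: op_pow1_Suc op_mul1_def X0)
qed

lemma op_pow1_top:
  assumes X0: "X 0 = 0" shows "op_pow1 X c e j j = c ^ j"
proof (induction j)
  case 0 then show ?case by (simp add: op_pow1_0 op_one_def)
next
  case (Suc j)
  have "op_pow1 X c e j (Suc j) = 0" by (rule op_pow1_above[where X=X, OF X0]) simp
  with Suc show ?case by (simp add: op_pow1_Suc op_mul1_def X0)
qed

lemma op_pow1_sub1:
  assumes D: "is_derivation X" shows "op_pow1 X 1 b (Suc j) j = of_nat (Suc j) * b"
proof (induction j)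
  case 0 then show ?case by (simp add: op_pow1_Suc op_pow1_0 op_mul1_def op_one_def der_rules[OF D])
next
  case (Suc j)
  have t: "op_pow1 X 1 b (Suc j) (Suc j) = 1" using op_pow1_top[of X 1 b "Suc j"] der_rules[OF D] by simp
  show ?case using Suc t
    by (simp add: op_pow1_Suc[of X 1 b "Suc j"] op_mul1_def der_rules[OF D] algebra_simps)
qed

section \<open>Triangular bases\<close>

lemma basis_exists:
  fixes P :: "nat \<Rightarrow> nat \<Rightarrow> 'a::ring_1"
  assumes P1: "\<And>j. P j j = 1" and P0: "\<And>j m. j < m \<Longrightarrow> P j m = 0"
  shows "(\<forall>m>d. M m = 0) \<Longrightarrow> \<exists>c. \<forall>m. M m = (\<Sum>j=0..d. c j * P j m)"
proof (induction d arbitrary: M)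
  case 0
  show ?case
  proof (rule exI[of _ "\<lambda>_. M 0"], intro allI)
    fix m show "M m = (\<Sum>j=0..0. M 0 * P j m)"
      using 0 P1[of 0] P0[of 0 m] by (cases "m = 0") auto
  qed
next
  case (Suc d)
  define t where "t = M (Suc d)"
  define M' where "M' m = M m - t * P (Suc d) m" for m
  have "\<forall>m>d. M' m = 0"
  proof (intro allI impI)
    fix m assume "d < m"
    then consider "m = Suc d" | "m > Suc d" by linarith
    then show "M' m = 0"
    proof cases
      case 1 then show ?thesis by (simp add: M'_def t_def P1)
    next
      case 2 then show ?thesis using Suc.prems P0[of "Suc d" m] by (simp add: M'_def)
    qed
  qed
  from Suc.IH[OF this] obtain c' where c': "\<And>m. M' m = (\<Sum>j=0..d. c' j * P j m)" by blast
  show ?case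
  proof (rule exI[of _ "c'(Suc d := t)"], intro allI)
    fix m
    have "M m = M' m + t * P (Suc d) m" by (simp add: M'_def)
    also have "\<dots> = (\<Sum>j=0..d. (c'(Suc d := t)) j * P j m) + t * P (Suc d) m"
      by (simp add: c')
    also have "\<dots> = (\<Sum>j=0..Suc d. (c'(Suc d := t)) j * P j m)"
      by (simp add: sum.atLeast0_atMost_Suc)
    finally show "M m = (\<Sum>j=0..Suc d. (c'(Suc d := t)) j * P j m)" .
  qed
qed

lemma basis_unique:
  fixes P :: "nat \<Rightarrow> nat \<Rightarrow> 'a::ring_1"
  assumes P1: "\<And>j. P j j = 1" and P0: "\<And>j m. j < m \<Longrightarrow> P j m = 0"
  shows "(\<forall>m. (\<Sum>j=0..d. c j * P j m) = 0) \<Longrightarrow> \<forall>j\<le>d. c j = 0"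
proof (induction d)
  case 0
  then show ?case using spec[OF 0, of 0] P1[of 0] by simp
next
  case (Suc d)
  have z: "(\<Sum>j=0..d. c j * P j (Suc d)) = 0"
    by (rule sum.neutral) (simp add: P0)
  have "c (Suc d) = 0"
    using spec[OF Suc.prems, of "Suc d"] z P1[of "Suc d"] by (simp add: sum.atLeast0_atMost_Suc)
  moreover have "\<forall>m. (\<Sum>j=0..d. c j * P j m) = 0"
  proof
    fix m show "(\<Sum>j=0..d. c j * P j m) = 0"
      using spec[OF Suc.prems, of m] \<open>c (Suc d) = 0\<close> by (simp add: sum.atLeast0_atMost_Suc)
  qed
  then have "\<forall>j\<le>d. c j = 0" by (rule Suc.IH)
  ultimately show ?case by (metis le_Suc_eq)
qed

lemma sum_reindex_minus:
  fixes g :: "nat \<Rightarrow> 'a::comm_monoid_add"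
  assumes "n \<ge> 2"
  shows "(\<Sum>k=2..n. g (n - k)) = (\<Sum>j=0..n-2. g j)"
  by (rule sum.reindex_bij_witness[of _ "\<lambda>j. n - j" "\<lambda>k. n - k"]) (use assms in auto)

lemma sum_top2:
  fixes f :: "nat \<Rightarrow> 'a::comm_monoid_add"
  assumes "n \<ge> 2"
  shows "(\<Sum>j=0..n. f j) = (\<Sum>j=0..n-2. f j) + f (n - 1) + f n"
proof -
  obtain m where m: "n = Suc (Suc m)" using assms by (metis add_2_eq_Suc le_Suc_ex)
  show ?thesis unfolding m by (simp add: sum.atLeast0_atMost_Suc add.assoc)
qed

section \<open>Gauge-Wilczynski covariants from an expansion\<close>

lemma wilcz_from_c:
  fixes Dr :: "'a::ring_1 \<Rightarrow> 'a"
  assumes QAlg: "\<And>m::nat. m > 0 \<Longrightarrow> is_unit_ring (of_nat m :: 'a)"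
    and Der: "is_derivation Dr" and n2: "n \<ge> 2"
    and M: "\<And>m. M m = (\<Sum>j=0..n. c j * op_pow1 Dr 1 b j m)"
    and cn: "c n = 1" and cn1: "c (n - 1) = 0"
  shows "\<And>k. k \<in> {2..n} \<Longrightarrow> wilczynski Dr n M k = rinv (of_nat (n choose k)) * c (n - k)"
proof -
  define P where "P j = op_pow1 Dr 1 b j" for j
  have X0: "Dr 0 = 0" by (rule der_rules(3)[OF Der])
  have P1: "\<And>j. P j j = 1" unfolding P_def using op_pow1_top[where X=Dr, OF X0, of 1 b] by simp
  have P0: "\<And>j m. j < m \<Longrightarrow> P j m = 0" unfolding P_def by (rule op_pow1_above[where X=Dr, OF X0])
  have Pn1: "P n (n - 1) = of_nat n * b"
    using op_pow1_sub1[OF Der, of b "n - 1"] n2 unfolding P_def by (simp add: Suc_diff_1)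
  have Msum: "\<And>m. M m = (\<Sum>j=0..n-2. c j * P j m) + P n m"
    unfolding M P_def using cn cn1 by (simp add: sum_top2[OF n2])
  have z: "(\<Sum>j=0..n-2. c j * P j (n - 1)) = 0"
    by (rule sum.neutral) (use n2 P0 in auto)
  have Mn1: "M (n - 1) = of_nat n * b" using Msum[of "n - 1"] z Pn1 by simp
  have un: "is_unit_ring (of_nat n :: 'a)" using QAlg n2 by simp
  have b1: "rinv (of_nat n) * M (n - 1) = b" unfolding Mn1 by (rule rinv_mult_cancel2[OF un])
  have uC: "\<And>k. k \<in> {2..n} \<Longrightarrow> is_unit_ring (of_nat (n choose k) :: 'a)"
    using QAlg by auto
  define I where "I k = (if k \<in> {2..n} then rinv (of_nat (n choose k)) * c (n - k) else 0)" for k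
  have CI: "\<And>k. k \<in> {2..n} \<Longrightarrow> of_nat (n choose k) * I k = c (n - k)"
    unfolding I_def using uC by (simp add: rinv_mult_cancel)
  have sumI: "\<And>m. (\<Sum>k=2..n. of_nat (n choose k) * I k * P (n - k) m) = (\<Sum>j=0..n-2. c j * P j m)"
  proof -
    fix m
    have "(\<Sum>k=2..n. of_nat (n choose k) * I k * P (n - k) m) = (\<Sum>k=2..n. c (n - k) * P (n - k) m)"
      by (rule sum.cong) (simp_all add: CI)
    also have "\<dots> = (\<Sum>j=0..n-2. c j * P j m)" by (rule sum_reindex_minus[OF n2])
    finally show "(\<Sum>k=2..n. of_nat (n choose k) * I k * P (n - k) m) = (\<Sum>j=0..n-2. c j * P j m)" .
  qed
  have W: "wilczynski Dr n M = I"
    unfolding wilczynski_def Let_def b1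
  proof (rule the_equality)
    show "(\<forall>k. k \<notin> {2..n} \<longrightarrow> I k = 0) \<and>
      (\<forall>m. M m = op_pow1 Dr 1 b n m + (\<Sum>k = 2..n. of_nat (n choose k) * I k * op_pow1 Dr 1 b (n - k) m))"
      using sumI Msum unfolding P_def by (simp add: I_def add.commute)
  next
    fix I' assume H: "(\<forall>k. k \<notin> {2..n} \<longrightarrow> I' k = 0) \<and>
      (\<forall>m. M m = op_pow1 Dr 1 b n m + (\<Sum>k = 2..n. of_nat (n choose k) * I' k * op_pow1 Dr 1 b (n - k) m))"
    define x where "x j = of_nat (n choose (n - j)) * (I (n - j) - I' (n - j))" for j
    have "\<forall>m. (\<Sum>j=0..n-2. x j * P j m) = 0"
    proof
      fix m
      have e1: "M m = P n m + (\<Sum>k=2..n. of_nat (n choose k) * I' k * P (n - k) m)"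
        using H unfolding P_def by blast
      have e2: "M m = P n m + (\<Sum>k=2..n. of_nat (n choose k) * I k * P (n - k) m)"
        using sumI Msum by (simp add: add.commute)
      have "(\<Sum>k=2..n. of_nat (n choose k) * (I k - I' k) * P (n - k) m) =
            (\<Sum>k=2..n. of_nat (n choose k) * I k * P (n - k) m) - (\<Sum>k=2..n. of_nat (n choose k) * I' k * P (n - k) m)"
        by (simp add: sum_subtractf algebra_simps)
      also have "\<dots> = 0" using e1 e2 by simp
      finally have "(\<Sum>k=2..n. of_nat (n choose k) * (I k - I' k) * P (n - k) m) = 0" .
      moreover have "(\<Sum>k=2..n. of_nat (n choose k) * (I k - I' k) * P (n - k) m) = (\<Sum>j=0..n-2. x j * P j m)"
      proof -
        have "(\<Sum>k=2..n. of_nat (n choose k) * (I k - I' k) * P (n - k) m) = (\<Sum>k=2..n. x (n - k) * P (n - k) m)"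
          by (rule sum.cong) (auto simp: x_def)
        also have "\<dots> = (\<Sum>j=0..n-2. x j * P j m)" by (rule sum_reindex_minus[OF n2])
        finally show ?thesis .
      qed
      ultimately show "(\<Sum>j=0..n-2. x j * P j m) = 0" by simp
    qed
    then have x0: "\<forall>j\<le>n-2. x j = 0" using basis_unique[where P=P and d="n - 2" and c=x, OF P1 P0] by blast
    show "I' = I"
    proof
      fix k show "I' k = I k"
      proof (cases "k \<in> {2..n}")
        case True
        then have "x (n - k) = 0" using x0 by auto
        then have "of_nat (n choose k) * (I k - I' k) = 0" using True by (simp add: x_def)
        then have "of_nat (n choose k) * I k = of_nat (n choose k) * I' k" by (simp add: algebra_simps)
        then show ?thesis using unit_cancel_left[OF uC[OF True]] by metis
      next
        case False then show ?thesis using H by (auto simp: I_def)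
      qed
    qed
  qed
  fix k assume "k \<in> {2..n}" then show "wilczynski Dr n M k = rinv (of_nat (n choose k)) * c (n - k)"
    by (simp add: W I_def)
qed

definition PhiN :: "('a::ring_1 \<Rightarrow> 'a) \<Rightarrow> ('a \<Rightarrow> 'a) \<Rightarrow> 'a \<Rightarrow> nat \<Rightarrow> (nat \<Rightarrow> 'a) \<Rightarrow> nat \<Rightarrow> 'a" where
  "PhiN Dr lam sg n Q m = (\<Sum>i=0..n. lam (Q i) * op_pow1 Dr sg 0 i m)"

definition TN :: "('a::ring_1 \<Rightarrow> 'a) \<Rightarrow> 'a \<Rightarrow> nat \<Rightarrow> (nat \<Rightarrow> 'a) \<Rightarrow> nat \<Rightarrow> 'a" where
  "TN Dr b n Q m = (\<Sum>i=0..n. Q i * op_pow1 Dr 1 b i m)"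

lemma sum_shift_down:
  fixes f :: "nat \<Rightarrow> 'a::comm_monoid_add"
  assumes "n \<ge> 1" and "f n = 0"
  shows "(\<Sum>i=0..n. (if i = 0 then 0 else f (i - 1))) = (\<Sum>i=0..n. f i)"
proof -
  obtain k where k: "n = Suc k" using assms(1) by (cases n) auto
  have "(\<Sum>i=0..n. (if i = 0 then 0 else f (i - 1))) = (\<Sum>i=0..k. f i)"
    unfolding k sum.atLeast0_atMost_Suc_shift by simp
  also have "\<dots> = (\<Sum>i=0..n. f i)" using assms(2) unfolding k by (simp add: sum.atLeast0_atMost_Suc)
  finally show ?thesis .
qed

lemma hom_sum:
  assumes add: "\<And>x y. lam (x + y) = lam x + lam y" and z: "lam 0 = 0"
  shows "lam (\<Sum>i\<in>A. f i) = (\<Sum>i\<in>A. lam (f i))"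
  by (induction A rule: infinite_finite_induct) (simp_all add: z add)

lemma Phi_step:
  fixes Dr :: "'a::ring_1 \<Rightarrow> 'a"
  assumes Der: "is_derivation Dr"
    and ladd: "\<And>x y. lam (x + y) = lam x + lam y" and lmul: "\<And>x y. lam (x * y) = lam x * lam y"
    and l0: "lam 0 = 0"
    and csg: "central sg" and chain: "\<And>x. sg * Dr (lam x) = lam (Dr x)"
    and n1: "n \<ge> 1" and Qn: "Q n = 0"
  shows "PhiN Dr lam sg n (op_mul1 Dr 1 b Q) m = op_mul1 Dr sg (lam b) (PhiN Dr lam sg n Q) m"
proof -
  note dr = der_rules[OF Der]
  define S where "S i = op_pow1 Dr sg 0 i" for i
  have Ssuc: "\<And>i. S (Suc i) m = sg * ((if m = 0 then 0 else S i (m - 1)) + Dr (S i m))"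
    by (simp add: S_def op_pow1_Suc op_mul1_def)
  have cs: "\<And>x. sg * x = x * sg" using csg by (simp add: central_def)
  have LHS: "PhiN Dr lam sg n (op_mul1 Dr 1 b Q) m =
     (\<Sum>i=0..n. (if i = 0 then 0 else lam (Q (i - 1)) * S i m)) +
     (\<Sum>i=0..n. (lam (Dr (Q i)) + lam b * lam (Q i)) * S i m)"
  proof -
    have "PhiN Dr lam sg n (op_mul1 Dr 1 b Q) m = (\<Sum>i=0..n. (if i = 0 then 0 else lam (Q (i - 1)) * S i m)
       + (lam (Dr (Q i)) + lam b * lam (Q i)) * S i m)"
      unfolding PhiN_def S_def[symmetric]
      by (rule sum.cong) (auto simp: op_mul1_def ladd lmul l0 distrib_right)
    then show ?thesis by (simp only: sum.distrib)
  qed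
  have sh: "(\<Sum>i=0..n. (if i = 0 then 0 else lam (Q (i - 1)) * S i m)) =
            (\<Sum>i=0..n. lam (Q i) * S (Suc i) m)"
    using sum_shift_down[OF n1, of "\<lambda>i. lam (Q i) * S (Suc i) m"] Qn l0
    by (simp add: Suc_diff_1 cong: if_cong)
  have RHS: "op_mul1 Dr sg (lam b) (PhiN Dr lam sg n Q) m =
     (\<Sum>i=0..n. sg * ((if m = 0 then 0 else lam (Q i) * S i (m - 1)) + (Dr (lam (Q i)) * S i m
        + lam (Q i) * Dr (S i m))) + lam b * (lam (Q i) * S i m))"
    unfolding op_mul1_def PhiN_def S_def[symmetric]
    by (simp add: hom_sum[where lam=Dr, OF dr(1) dr(3)] dr sum_distrib_left sum.distrib
        distrib_left if_distrib cong: if_cong)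
  have trm: "\<And>i. sg * ((if m = 0 then 0 else lam (Q i) * S i (m - 1)) + (Dr (lam (Q i)) * S i m
        + lam (Q i) * Dr (S i m))) + lam b * (lam (Q i) * S i m)
      = lam (Q i) * S (Suc i) m + (lam (Dr (Q i)) + lam b * lam (Q i)) * S i m"
  proof -
    fix i
    have a: "sg * (lam (Q i) * y) = lam (Q i) * (sg * y)" for y
      by (simp only: mult.assoc[symmetric] cs[of "lam (Q i)"])
    have b: "sg * (Dr (lam (Q i)) * z) = lam (Dr (Q i)) * z" for z
      by (simp add: mult.assoc[symmetric] chain)
    show "sg * ((if m = 0 then 0 else lam (Q i) * S i (m - 1)) + (Dr (lam (Q i)) * S i m
        + lam (Q i) * Dr (S i m))) + lam b * (lam (Q i) * S i m)
      = lam (Q i) * S (Suc i) m + (lam (Dr (Q i)) + lam b * lam (Q i)) * S i m"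
      unfolding Ssuc
      by (cases "m = 0") (simp_all add: distrib_left distrib_right a b mult.assoc add_ac)
  qed
  show ?thesis unfolding LHS sh RHS trm by (simp add: sum.distrib)
qed

lemma T_step:
  fixes Dr :: "'a::ring_1 \<Rightarrow> 'a"
  assumes Der: "is_derivation Dr" and n1: "n \<ge> 1" and Qn: "Q n = 0"
  shows "TN Dr b n (op_mul1 (\<lambda>x. Dr x + b * x - x * b) c e Q) m = op_mul1 Dr c (c * b + e) (TN Dr b n Q) m"
proof -
  note dr = der_rules[OF Der]
  define P where "P i = op_pow1 Dr 1 b i" for i
  have Psuc: "\<And>i. P (Suc i) m = ((if m = 0 then 0 else P i (m - 1)) + Dr (P i m)) + b * P i m"
    by (simp add: P_def op_pow1_Suc op_mul1_def)
  have LHS: "TN Dr b n (op_mul1 (\<lambda>x. Dr x + b * x - x * b) c e Q) m =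
     (\<Sum>i=0..n. (if i = 0 then 0 else c * Q (i - 1) * P i m)) +
     (\<Sum>i=0..n. (c * (Dr (Q i) + b * Q i - Q i * b) + e * Q i) * P i m)"
  proof -
    have "TN Dr b n (op_mul1 (\<lambda>x. Dr x + b * x - x * b) c e Q) m = (\<Sum>i=0..n. (if i = 0 then 0 else c * Q (i - 1) * P i m)
       + (c * (Dr (Q i) + b * Q i - Q i * b) + e * Q i) * P i m)"
      unfolding TN_def P_def[symmetric]
      by (rule sum.cong) (auto simp: op_mul1_def distrib_right distrib_left)
    then show ?thesis by (simp only: sum.distrib)
  qed
  have sh: "(\<Sum>i=0..n. (if i = 0 then 0 else c * Q (i - 1) * P i m)) =
            (\<Sum>i=0..n. c * Q i * P (Suc i) m)"
    using sum_shift_down[OF n1, of "\<lambda>i. c * Q i * P (Suc i) m"] Qn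
    by (simp add: Suc_diff_1 cong: if_cong)
  have RHS: "op_mul1 Dr c (c * b + e) (TN Dr b n Q) m =
     (\<Sum>i=0..n. c * ((if m = 0 then 0 else Q i * P i (m - 1)) + (Dr (Q i) * P i m
        + Q i * Dr (P i m))) + (c * b + e) * (Q i * P i m))"
    unfolding op_mul1_def TN_def P_def[symmetric]
    by (simp add: hom_sum[where lam=Dr, OF dr(1) dr(3)] dr sum_distrib_left sum.distrib
        distrib_left if_distrib cong: if_cong)
  have trm: "\<And>i. c * ((if m = 0 then 0 else Q i * P i (m - 1)) + (Dr (Q i) * P i m
        + Q i * Dr (P i m))) + (c * b + e) * (Q i * P i m)
      = c * Q i * P (Suc i) m + (c * (Dr (Q i) + b * Q i - Q i * b) + e * Q i) * P i m"
    unfolding Psuc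
    by (cases "m = 0") (simp_all add: algebra_simps)
  show ?thesis unfolding LHS sh RHS trm by (simp add: sum.distrib)
qed

lemma Phi_lin:
  assumes ladd: "\<And>x y. lam (x + y) = lam x + lam y" and lmul: "\<And>x y. lam (x * y) = lam x * lam y"
    and l0: "lam 0 = 0"
  shows "PhiN Dr lam sg n (\<lambda>i. \<Sum>j\<in>A. c j * F j i) m = (\<Sum>j\<in>A. lam (c j) * PhiN Dr lam sg n (F j) m)"
proof -
  have "PhiN Dr lam sg n (\<lambda>i. \<Sum>j\<in>A. c j * F j i) m =
        (\<Sum>i=0..n. \<Sum>j\<in>A. lam (c j) * (lam (F j i) * op_pow1 Dr sg 0 i m))"
    unfolding PhiN_def
    by (simp add: hom_sum[where lam=lam, OF ladd l0] lmul sum_distrib_right mult.assoc)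
  also have "\<dots> = (\<Sum>j\<in>A. \<Sum>i=0..n. lam (c j) * (lam (F j i) * op_pow1 Dr sg 0 i m))"
    by (rule sum.swap)
  also have "\<dots> = (\<Sum>j\<in>A. lam (c j) * PhiN Dr lam sg n (F j) m)"
    unfolding PhiN_def by (simp add: sum_distrib_left)
  finally show ?thesis .
qed

lemma T_lin:
  shows "TN Dr b n (\<lambda>i. \<Sum>j\<in>A. x j * G j i) m = (\<Sum>j\<in>A. x j * TN Dr b n (G j) m)"
proof -
  have "TN Dr b n (\<lambda>i. \<Sum>j\<in>A. x j * G j i) m = (\<Sum>i=0..n. \<Sum>j\<in>A. x j * (G j i * op_pow1 Dr 1 b i m))"
    unfolding TN_def by (simp add: sum_distrib_right mult.assoc)
  also have "\<dots> = (\<Sum>j\<in>A. \<Sum>i=0..n. x j * (G j i * op_pow1 Dr 1 b i m))"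
    by (rule sum.swap)
  also have "\<dots> = (\<Sum>j\<in>A. x j * TN Dr b n (G j) m)"
    unfolding TN_def by (simp add: sum_distrib_left)
  finally show ?thesis .
qed

lemma Phi_one:
  assumes l0: "lam 0 = 0" and l1: "lam 1 = 1"
  shows "PhiN Dr lam sg n op_one m = op_one m"
proof -
  have "PhiN Dr lam sg n op_one m = (\<Sum>i=0..n. if i = 0 then op_pow1 Dr sg 0 0 m else 0)"
    unfolding PhiN_def by (rule sum.cong) (simp_all add: op_one_def l0 l1)
  also have "\<dots> = op_one m" by (simp add: op_pow1_0)
  finally show ?thesis .
qed

lemma T_one: "TN Dr b n op_one m = op_one m"
proof -
  have "TN Dr b n op_one m = (\<Sum>i=0..n. if i = 0 then op_pow1 Dr 1 b 0 m else 0)"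
    unfolding TN_def by (rule sum.cong) (simp_all add: op_one_def)
  also have "\<dots> = op_one m" by (simp add: op_pow1_0)
  finally show ?thesis .
qed

lemma Phi_pow:
  fixes Dr :: "'a::ring_1 \<Rightarrow> 'a"
  assumes Der: "is_derivation Dr"
    and ladd: "\<And>x y. lam (x + y) = lam x + lam y" and lmul: "\<And>x y. lam (x * y) = lam x * lam y"
    and l0: "lam 0 = 0" and l1: "lam 1 = 1"
    and csg: "central sg" and chain: "\<And>x. sg * Dr (lam x) = lam (Dr x)"
    and n1: "n \<ge> 1"
  shows "j \<le> n \<Longrightarrow> PhiN Dr lam sg n (op_pow1 Dr 1 b j) = op_pow1 Dr sg (lam b) j"
proof (induction j)
  case 0 then show ?case by (simp add: fun_eq_iff op_pow1_0 Phi_one[OF l0 l1])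
next
  case (Suc j)
  have X0: "Dr 0 = 0" by (rule der_rules(3)[OF Der])
  have Qn: "op_pow1 Dr 1 b j n = 0" using Suc.prems by (intro op_pow1_above[where X=Dr, OF X0]) simp
  show ?case
  proof
    fix m
    have "PhiN Dr lam sg n (op_pow1 Dr 1 b (Suc j)) m = op_mul1 Dr sg (lam b) (PhiN Dr lam sg n (op_pow1 Dr 1 b j)) m"
      unfolding op_pow1_Suc by (rule Phi_step[where Q="op_pow1 Dr 1 b j", OF Der ladd lmul l0 csg chain n1 Qn])
    also have "\<dots> = op_pow1 Dr sg (lam b) (Suc j) m" using Suc by (simp add: op_pow1_Suc)
    finally show "PhiN Dr lam sg n (op_pow1 Dr 1 b (Suc j)) m = op_pow1 Dr sg (lam b) (Suc j) m" .
  qed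
qed

lemma T_pow:
  fixes Dr :: "'a::ring_1 \<Rightarrow> 'a"
  assumes Der: "is_derivation Dr" and n1: "n \<ge> 1" and be: "sg * b + g = beta"
  shows "j \<le> n \<Longrightarrow> TN Dr b n (op_pow1 (\<lambda>x. Dr x + b * x - x * b) sg g j) = op_pow1 Dr sg beta j"
proof (induction j)
  case 0 then show ?case by (simp add: fun_eq_iff op_pow1_0 T_one)
next
  case (Suc j)
  have X0: "(\<lambda>x. Dr x + b * x - x * b) 0 = 0" by (simp add: der_rules(3)[OF Der])
  have Qn: "op_pow1 (\<lambda>x. Dr x + b * x - x * b) sg g j n = 0"
    using Suc.prems by (intro op_pow1_above[where X="\<lambda>x. Dr x + b * x - x * b", OF X0]) simp
  show ?case
  proof
    fix m
    have "TN Dr b n (op_pow1 (\<lambda>x. Dr x + b * x - x * b) sg g (Suc j)) m =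
       op_mul1 Dr sg (sg * b + g) (TN Dr b n (op_pow1 (\<lambda>x. Dr x + b * x - x * b) sg g j)) m"
      unfolding op_pow1_Suc by (rule T_step[where Q="op_pow1 (\<lambda>x. Dr x + b * x - x * b) sg g j", OF Der n1 Qn])
    also have "\<dots> = op_pow1 Dr sg beta (Suc j) m" using Suc be by (simp add: op_pow1_Suc)
    finally show "TN Dr b n (op_pow1 (\<lambda>x. Dr x + b * x - x * b) sg g (Suc j)) m = op_pow1 Dr sg beta (Suc j) m" .
  qed
qed

definition Bt1 :: "'a::ring_1 \<Rightarrow> 'a \<Rightarrow> 'a \<Rightarrow> 'a" where
  "Bt1 J h y0 = J * y0 + 2 * J * h * y0 - J * J * y0"

definition Bt2 :: "'a::ring_1 \<Rightarrow> 'a \<Rightarrow> 'a \<Rightarrow> 'a \<Rightarrow> 'a" where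
  "Bt2 J h y0 y1 = - 8 * J * y1 - 2 * J * y0 * y0 - 12 * J * h * y1 - 12 * J * h * y0 * y0 - 12 * J * h * h * y0 * y0 + 12 * J * J * y1 + 9 * J * J * y0 * y0 + 12 * J * J * h * y1 + 24 * J * J * h * y0 * y0 + 12 * J * J * h * h * y0 * y0 - 4 * J * J * J * y1 - 10 * J * J * J * y0 * y0 - 12 * J * J * J * h * y0 * y0 + 3 * J * J * J * J * y0 * y0"

definition Bt3 :: "'a::ring_1 \<Rightarrow> 'a \<Rightarrow> 'a \<Rightarrow> 'a \<Rightarrow> 'a \<Rightarrow> 'a" where
  "Bt3 J h y0 y1 y2 = 12 * J * y2 + 12 * J * y0 * y1 + 16 * J * h * y2 + 56 * J * h * y0 * y1 + 8 * J * h * y0 * y0 * y0 + 48 * J * h * h * y0 * y1 + 24 * J * h * h * y0 * y0 * y0 + 16 * J * h * h * h * y0 * y0 * y0 - 22 * J * J * y2 - 46 * J * J * y0 * y1 - 6 * J * J * y0 * y0 * y0 - 24 * J * J * h * y2 - 124 * J * J * h * y0 * y1 - 40 * J * J * h * y0 * y0 * y0 - 72 * J * J * h * h * y0 * y1 - 60 * J * J * h * h * y0 * y0 * y0 - 24 * J * J * h * h * h * y0 * y0 * y0 + 12 * J * J * J * y2 + 56 * J * J * J * y0 * y1 + 17 * J * J * J * y0 * y0 * y0 + 8 * J * J * J * h * y2 + 88 * J * J * J * h * y0 * y1 + 58 * J * J * J * h * y0 * y0 * y0 + 24 * J * J * J * h * h * y0 * y1 + 48 * J * J * J * h * h * y0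 * y0 * y0 + 8 * J * J * J * h * h * h * y0 * y0 * y0 - 2 * J * J * J * J * y2 - 26 * J * J * J * J * y0 * y1 - 17 * J * J * J * J * y0 * y0 * y0 - 20 * J * J * J * J * h * y0 * y1 - 32 * J * J * J * J * h * y0 * y0 * y0 - 12 * J * J * J * J * h * h * y0 * y0 * y0 + 4 * J * J * J * J * J * y0 * y1 + 7 * J * J * J * J * J * y0 * y0 * y0 + 6 * J * J * J * J * J * h * y0 * y0 * y0 - J * J * J * J * J * J * y0 * y0 * y0"

definition Bt4 :: "'a::ring_1 \<Rightarrow> 'a \<Rightarrow> 'a \<Rightarrow> 'a \<Rightarrow> 'a \<Rightarrow> 'a \<Rightarrow> 'a" where
  "Bt4 J h y0 y1 y2 y3 = - 1152 * J * y3 - 1536 * J * y1 * y1 - 1728 * J * y0 * y2 - 192 * J * y0 * y0 * y1 + 48 * J * y0 * y0 * y0 * y0 - 1440 * J * h * y3 - 5760 * J * h * y1 * y1 - 7200 * J * h * y0 * y2 - 5760 * J * h * y0 * y0 * y1 - 4320 * J * h * h * y1 * y1 - 5760 * J * h * h * y0 * y2 - 14400 * J * h * h * y0 * y0 * y1 - 1440 * J * h * h * y0 * y0 * y0 * y0 - 8640 * J * h * h * h * y0 * y0 * y1 - 2880 * J * h * h * h * y0 * y0 * y0 * y0 - 1440 * J * h * h * h * h * y0 * y0 * y0 * y0 + 2400 * J * J * y3 + 5120 * J * J * y1 * y1 + 6480 * J * J * y0 * y2 + 4240 * J * J * y0 * y0 * y1 + 20 * J * J * y0 * y0 * y0 *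 y0 + 2640 * J * J * h * y3 + 13440 * J * J * h * y1 * y1 + 17520 * J * J * h * y0 * y2 + 25680 * J * J * h * y0 * y0 * y1 + 2160 * J * J * h * y0 * y0 * y0 * y0 + 7920 * J * J * h * h * y1 * y1 + 10560 * J * J * h * h * y0 * y2 + 37920 * J * J * h * h * y0 * y0 * y1 + 7680 * J * J * h * h * y0 * y0 * y0 * y0 + 15840 * J * J * h * h * h * y0 * y0 * y1 + 8160 * J * J * h * h * h * y0 * y0 * y0 * y0 + 2640 * J * J * h * h * h * h * y0 * y0 * y0 * y0 - 1680 * J * J * J * y3 - 6240 * J * J * J * y1 * y1 - 8520 * J * J * J * y0 * y2 - 11160 * J * J * J * y0 * y0 * y1 - 900 * J * J * J * y0 * y0 * y0 * y0 - 1440 * J * J * J * h * y3 - 11040 * J * J * J * h * y1 * y1 - 15120 * J * J * J * h * y0 * y2 - 38520 * J * J * J * h * y0 * y0 * y1 - 6840 * J * J * J * h * y0 * y0 * y0 * y0 - 4320 * J * J * J * h * h * y1 * y1 - 5760 * J * J * J * h * h * y0 * y2 - 35520 * J * J * J * h * h * y0 * y0 * y1 - 12840 * J * J * J * h * h * y0 * y0 * y0 * y0 - 8640 * J * J * J * h * h * h * y0 * y0 * y1 - 8160 * J * J * J * h * h * h * y0 * y0 * y0 * y0 - 1440 * J * J * J * h * h * h * h * y0 * y0 * y0 * y0 + 480 * J * J * J * J * y3 + 3440 * J * J * J * J * y1 * y1 + 4920 * J * J * J * J * y0 * y2 + 11680 * J * J * J * J * y0 * y0 * y1 + 2015 * J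 * J * J * J * y0 * y0 * y0 * y0 + 240 * J * J * J * J * h * y3 + 3840 * J * J * J * J * h * y1 * y1 + 5520 * J * J * J * J * h * y0 * y2 + 25320 * J * J * J * J * h * y0 * y0 * y1 + 8160 * J * J * J * J * h * y0 * y0 * y0 * y0 + 720 * J * J * J * J * h * h * y1 * y1 + 960 * J * J * J * J * h * h * y0 * y2 + 13920 * J * J * J * J * h * h * y0 * y0 * y1 + 9240 * J * J * J * J * h * h * y0 * y0 * y0 * y0 + 1440 * J * J * J * J * h * h * h * y0 * y0 * y1 + 3360 * J * J * J * J * h * h * h * y0 * y0 * y0 * y0 + 240 * J * J * J * J * h * h * h * h * y0 * y0 * y0 * y0 - 48 * J * J * J * J * J * y3 - 864 * J * J * J * J * J * y1 * y1 - 1272 * J * J * J * J * J * y0 * y2 - 5808 * J * J * J * J * J * y0 * y0 * y1 - 1848 * J * J * J * J * J * y0 * y0 * y0 * y0 - 480 * J * J * J * J * J * h * y1 * y1 - 720 * J * J * J * J * J * h * y0 * y2 - 7560 * J * J * J * J * J * h * y0 * y0 * y1 - 4560 * J * J * J * J * J * h * y0 * y0 * y0 * y0 - 1920 * J * J * J * J * J * h * h * y0 * y0 * y1 - 3000 * J * J * J * J * J * h * h * y0 * y0 * y0 * y0 - 480 * J * J * J * J * J * h * h * h * y0 * y0 * y0 * y0 + 80 * J * J * J * J * J * J * y1 * y1 + 120 * J * J * J * J * J * J * y0 * y2 + 1360 * J * J * J * J * J * J * y0 * y0 * y1 + 830 * J * J * J * J * J * J * y0 * y0 * y0 * y0 +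 840 * J * J * J * J * J * J * h * y0 * y0 * y1 + 1200 * J * J * J * J * J * J * h * y0 * y0 * y0 * y0 + 360 * J * J * J * J * J * J * h * h * y0 * y0 * y0 * y0 - 120 * J * J * J * J * J * J * J * y0 * y0 * y1 - 180 * J * J * J * J * J * J * J * y0 * y0 * y0 * y0 - 120 * J * J * J * J * J * J * J * h * y0 * y0 * y0 * y0 + 15 * J * J * J * J * J * J * J * J * y0 * y0 * y0 * y0"

lemma Bstep1:
  fixes Dr :: "'a::ring_1 \<Rightarrow> 'a"
  assumes Der: "is_derivation Dr"
    and cs: "central s" "central sj" "central J" "central h" "central y0" "central y1" "central y2" "central y3"
    and dJ: "Dr J = 0" and dh: "Dr h = 0" and dsj: "Dr sj = - (J * sj * y0)"
    and dy: "Dr y0 = y1" "Dr y1 = y2" "Dr y2 = y3"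
  shows "s * (sj * Bt1 J h y0) + 2 * (s * Dr (sj * 1) + (h * s * y0) * (sj * 1))
     = (s * sj) * Bt1 (J + 1) h y0"
proof -
  note tr = transferK[OF cs central_0 central_0 central_0 central_0]
  define \<Phi> where "\<Phi> = TRK s sj J h y0 y1 y2 y3 (0::'a) 0 0 0"
  note tr' = tr[folded \<Phi>_def]
  note fo = chom_fold[OF tr'(1)]
  show ?thesis
    apply (simp only: Bt1_def Bt2_def Bt3_def Bt4_def der_rules[OF Der] dJ dh dsj dy)
    apply (simp only: tr'(2-9)[symmetric])
    apply (simp only: fo)
    apply (rule arg_cong[where f="\<Phi>"])
    apply algebra
    done
qed

lemma Bstep2:
  fixes Dr :: "'a::ring_1 \<Rightarrow> 'a"
  assumes Der: "is_derivation Dr"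
    and cs: "central s" "central sj" "central J" "central h" "central y0" "central y1" "central y2" "central y3"
    and dJ: "Dr J = 0" and dh: "Dr h = 0" and dsj: "Dr sj = - (J * sj * y0)"
    and dy: "Dr y0 = y1" "Dr y1 = y2" "Dr y2 = y3"
  shows "s * (sj * Bt2 J h y0 y1) + 12 * (s * Dr (sj * Bt1 J h y0) + (h * s * y0) * (sj * Bt1 J h y0))
     = (s * sj) * Bt2 (J + 1) h y0 y1"
proof -
  note tr = transferK[OF cs central_0 central_0 central_0 central_0]
  define \<Phi> where "\<Phi> = TRK s sj J h y0 y1 y2 y3 (0::'a) 0 0 0"
  note tr' = tr[folded \<Phi>_def]
  note fo = chom_fold[OF tr'(1)]
  show ?thesis
    apply (simp only: Bt1_def Bt2_def Bt3_def Bt4_def der_rules[OF Der] dJ dh dsj dy)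
    apply (simp only: tr'(2-9)[symmetric])
    apply (simp only: fo)
    apply (rule arg_cong[where f="\<Phi>"])
    apply algebra
    done
qed

lemma Bstep3:
  fixes Dr :: "'a::ring_1 \<Rightarrow> 'a"
  assumes Der: "is_derivation Dr"
    and cs: "central s" "central sj" "central J" "central h" "central y0" "central y1" "central y2" "central y3"
    and dJ: "Dr J = 0" and dh: "Dr h = 0" and dsj: "Dr sj = - (J * sj * y0)"
    and dy: "Dr y0 = y1" "Dr y1 = y2" "Dr y2 = y3"
  shows "s * (sj * Bt3 J h y0 y1 y2) + 2 * (s * Dr (sj * Bt2 J h y0 y1) + (h * s * y0) * (sj * Bt2 J h y0 y1))
     = (s * sj) * Bt3 (J + 1) h y0 y1 y2"
proof -
  note tr = transferK[OF cs central_0 central_0 central_0 central_0]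
  define \<Phi> where "\<Phi> = TRK s sj J h y0 y1 y2 y3 (0::'a) 0 0 0"
  note tr' = tr[folded \<Phi>_def]
  note fo = chom_fold[OF tr'(1)]
  show ?thesis
    apply (simp only: Bt1_def Bt2_def Bt3_def Bt4_def der_rules[OF Der] dJ dh dsj dy)
    apply (simp only: tr'(2-9)[symmetric])
    apply (simp only: fo)
    apply (rule arg_cong[where f="\<Phi>"])
    apply algebra
    done
qed

lemma Bstep4:
  fixes Dr :: "'a::ring_1 \<Rightarrow> 'a"
  assumes Der: "is_derivation Dr"
    and cs: "central s" "central sj" "central J" "central h" "central y0" "central y1" "central y2" "central y3"
    and dJ: "Dr J = 0" and dh: "Dr h = 0" and dsj: "Dr sj = - (J * sj * y0)"
    and dy: "Dr y0 = y1" "Dr y1 = y2" "Dr y2 = y3"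
  shows "s * (sj * Bt4 J h y0 y1 y2 y3) + 120 * (s * Dr (sj * Bt3 J h y0 y1 y2) + (h * s * y0) * (sj * Bt3 J h y0 y1 y2))
     = (s * sj) * Bt4 (J + 1) h y0 y1 y2 y3"
proof -
  note tr = transferK[OF cs central_0 central_0 central_0 central_0]
  define \<Phi> where "\<Phi> = TRK s sj J h y0 y1 y2 y3 (0::'a) 0 0 0"
  note tr' = tr[folded \<Phi>_def]
  note fo = chom_fold[OF tr'(1)]
  show ?thesis
    apply (simp only: Bt1_def Bt2_def Bt3_def Bt4_def der_rules[OF Der] dJ dh dsj dy)
    apply (simp only: tr'(2-9)[symmetric])
    apply (simp only: fo)
    apply (rule arg_cong[where f="\<Phi>"])
    apply algebra
    done
qed

lemma Beval1:
  fixes h :: "'a::ring_1"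
  assumes cs: "central h" "central y0"
  shows "Bt1 0 h y0 = 0"
proof -
  note tr = transferK[OF cs central_0 central_0 central_0 central_0 central_0 central_0 central_0 central_0 central_0 central_0]
  define \<Phi> where "\<Phi> = TRK h y0 (0::'a) 0 0 0 0 0 0 0 0 0"
  note tr' = tr[folded \<Phi>_def]
  note fo = chom_fold[OF tr'(1)]
  show ?thesis
    apply (simp only: Bt1_def)
    apply (simp only: tr'(2-3)[symmetric])
    apply (simp only: fo)
    apply (rule arg_cong[where f="\<Phi>"])
    apply algebra
    done
qed

lemma Beval2:
  fixes h :: "'a::ring_1"
  assumes cs: "central h" "central y0" "central y1"
  shows "Bt2 1 h y0 y1 = 0"
proof -
  note tr = transferK[OF cs central_0 central_0 central_0 central_0 central_0 central_0 central_0 central_0 central_0]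
  define \<Phi> where "\<Phi> = TRK h y0 y1 (0::'a) 0 0 0 0 0 0 0 0"
  note tr' = tr[folded \<Phi>_def]
  note fo = chom_fold[OF tr'(1)]
  show ?thesis
    apply (simp only: Bt2_def)
    apply (simp only: tr'(2-4)[symmetric])
    apply (simp only: fo)
    apply (rule arg_cong[where f="\<Phi>"])
    apply algebra
    done
qed

lemma Beval3:
  fixes h :: "'a::ring_1"
  assumes cs: "central h" "central y0" "central y1" "central y2"
  shows "Bt3 2 h y0 y1 y2 = 0"
proof -
  note tr = transferK[OF cs central_0 central_0 central_0 central_0 central_0 central_0 central_0 central_0]
  define \<Phi> where "\<Phi> = TRK h y0 y1 y2 (0::'a) 0 0 0 0 0 0 0"
  note tr' = tr[folded \<Phi>_def]
  note fo = chom_fold[OF tr'(1)]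
  show ?thesis
    apply (simp only: Bt3_def)
    apply (simp only: tr'(2-5)[symmetric])
    apply (simp only: fo)
    apply (rule arg_cong[where f="\<Phi>"])
    apply algebra
    done
qed

lemma Beval4:
  fixes h :: "'a::ring_1"
  assumes cs: "central h" "central y0" "central y1" "central y2" "central y3"
  shows "Bt4 3 h y0 y1 y2 y3 = 0"
proof -
  note tr = transferK[OF cs central_0 central_0 central_0 central_0 central_0 central_0 central_0]
  define \<Phi> where "\<Phi> = TRK h y0 y1 y2 y3 (0::'a) 0 0 0 0 0 0"
  note tr' = tr[folded \<Phi>_def]
  note fo = chom_fold[OF tr'(1)]
  show ?thesis
    apply (simp only: Bt4_def)
    apply (simp only: tr'(2-6)[symmetric])
    apply (simp only: fo)
    apply (rule arg_cong[where f="\<Phi>"])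
    apply algebra
    done
qed

lemma Brearr1:
  fixes sg :: "'a::ring_1"
  assumes cs: "central sg" "central A" "central DB" "central g" "central B"
  shows "(2::'a) * (sg * (A + DB) + g * B) = sg * (2 * A) + 2 * (sg * (1 * DB) + g * (1 * B))"
proof -
  note tr = transferK[OF cs central_0 central_0 central_0 central_0 central_0 central_0 central_0]
  define \<Phi> where "\<Phi> = TRK sg A DB g B (0::'a) 0 0 0 0 0 0"
  note tr' = tr[folded \<Phi>_def]
  note fo = chom_fold[OF tr'(1)]
  show ?thesis
    apply (simp only: tr'(2-6)[symmetric])
    apply (simp only: fo)
    apply (rule arg_cong[where f="\<Phi>"])
    apply algebra
    done
qed

lemma Brearr2:
  fixes sg :: "'a::ring_1"
  assumes cs: "central sg" "central A" "central DB" "central g" "central B"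
  shows "(24::'a) * (sg * (A + DB) + g * B) = sg * (24 * A) + 12 * (sg * (2 * DB) + g * (2 * B))"
proof -
  note tr = transferK[OF cs central_0 central_0 central_0 central_0 central_0 central_0 central_0]
  define \<Phi> where "\<Phi> = TRK sg A DB g B (0::'a) 0 0 0 0 0 0"
  note tr' = tr[folded \<Phi>_def]
  note fo = chom_fold[OF tr'(1)]
  show ?thesis
    apply (simp only: tr'(2-6)[symmetric])
    apply (simp only: fo)
    apply (rule arg_cong[where f="\<Phi>"])
    apply algebra
    done
qed

lemma Brearr3:
  fixes sg :: "'a::ring_1"
  assumes cs: "central sg" "central A" "central DB" "central g" "central B"
  shows "(48::'a) * (sg * (A + DB) + g * B) = sg * (48 * A) + 2 * (sg * (24 * DB) + g * (24 * B))"
proof -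
  note tr = transferK[OF cs central_0 central_0 central_0 central_0 central_0 central_0 central_0]
  define \<Phi> where "\<Phi> = TRK sg A DB g B (0::'a) 0 0 0 0 0 0"
  note tr' = tr[folded \<Phi>_def]
  note fo = chom_fold[OF tr'(1)]
  show ?thesis
    apply (simp only: tr'(2-6)[symmetric])
    apply (simp only: fo)
    apply (rule arg_cong[where f="\<Phi>"])
    apply algebra
    done
qed

lemma Brearr4:
  fixes sg :: "'a::ring_1"
  assumes cs: "central sg" "central A" "central DB" "central g" "central B"
  shows "(5760::'a) * (sg * (A + DB) + g * B) = sg * (5760 * A) + 120 * (sg * (48 * DB) + g * (48 * B))"
proof -
  note tr = transferK[OF cs central_0 central_0 central_0 central_0 central_0 central_0 central_0]
  define \<Phi> where "\<Phi> = TRK sg A DB g B (0::'a) 0 0 0 0 0 0"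
  note tr' = tr[folded \<Phi>_def]
  note fo = chom_fold[OF tr'(1)]
  show ?thesis
    apply (simp only: tr'(2-6)[symmetric])
    apply (simp only: fo)
    apply (rule arg_cong[where f="\<Phi>"])
    apply algebra
    done
qed

lemma dpow_step:
  fixes s :: "'a::ring_1"
  assumes cs: "central s" "central sj" "central J" "central y0"
  shows "- (s * y0) * sj + s * (- (J * sj * y0)) = - ((J + 1) * (s * sj) * y0)"
proof -
  note tr = transferK[OF cs central_0 central_0 central_0 central_0 central_0 central_0 central_0 central_0]
  define \<Phi> where "\<Phi> = TRK s sj J y0 (0::'a) 0 0 0 0 0 0 0"
  note tr' = tr[folded \<Phi>_def]
  note fo = chom_fold[OF tr'(1)]
  show ?thesis
    apply (simp only: tr'(2-5)[symmetric])
    apply (simp only: fo)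
    apply (rule arg_cong[where f="\<Phi>"])
    apply algebra
    done
qed

lemma Bt1_central:
  assumes cs: "central J" "central h" "central y0"
  shows "central (Bt1 J h y0)"
proof -
  note tr = transferK[OF cs central_0 central_0 central_0 central_0 central_0 central_0 central_0 central_0 central_0]
  define \<Phi> where "\<Phi> = TRK J h y0 (0::'a) 0 0 0 0 0 0 0 0"
  note tr' = tr[folded \<Phi>_def]
  note fo = chom_fold[OF tr'(1)]
  show ?thesis
    apply (simp only: Bt1_def)
    apply (simp only: tr'(2-4)[symmetric])
    apply (simp only: fo)
    apply (rule chom_central[OF tr'(1)])
    done
qed

lemma Bt2_central:
  assumes cs: "central J" "central h" "central y0" "central y1"
  shows "central (Bt2 J h y0 y1)"
proof -
  note tr = transferK[OF cs central_0 central_0 central_0 central_0 central_0 central_0 central_0 central_0]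
  define \<Phi> where "\<Phi> = TRK J h y0 y1 (0::'a) 0 0 0 0 0 0 0"
  note tr' = tr[folded \<Phi>_def]
  note fo = chom_fold[OF tr'(1)]
  show ?thesis
    apply (simp only: Bt2_def)
    apply (simp only: tr'(2-5)[symmetric])
    apply (simp only: fo)
    apply (rule chom_central[OF tr'(1)])
    done
qed

lemma Bt3_central:
  assumes cs: "central J" "central h" "central y0" "central y1" "central y2"
  shows "central (Bt3 J h y0 y1 y2)"
proof -
  note tr = transferK[OF cs central_0 central_0 central_0 central_0 central_0 central_0 central_0]
  define \<Phi> where "\<Phi> = TRK J h y0 y1 y2 (0::'a) 0 0 0 0 0 0"
  note tr' = tr[folded \<Phi>_def]
  note fo = chom_fold[OF tr'(1)]
  show ?thesis
    apply (simp only: Bt3_def)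
    apply (simp only: tr'(2-6)[symmetric])
    apply (simp only: fo)
    apply (rule chom_central[OF tr'(1)])
    done
qed

lemma Bt4_central:
  assumes cs: "central J" "central h" "central y0" "central y1" "central y2" "central y3"
  shows "central (Bt4 J h y0 y1 y2 y3)"
proof -
  note tr = transferK[OF cs central_0 central_0 central_0 central_0 central_0 central_0]
  define \<Phi> where "\<Phi> = TRK J h y0 y1 y2 y3 (0::'a) 0 0 0 0 0"
  note tr' = tr[folded \<Phi>_def]
  note fo = chom_fold[OF tr'(1)]
  show ?thesis
    apply (simp only: Bt4_def)
    apply (simp only: tr'(2-7)[symmetric])
    apply (simp only: fo)
    apply (rule chom_central[OF tr'(1)])
    done
qed

lemma gen_step:
  fixes Dr :: "'a::ring_1 \<Rightarrow> 'a"
  assumes hA: "Mr * A = sj * F J" and hB: "Mr1 * B = sj * G J"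
    and rearr: "Mr * (sg * (A + Dr B) + g * B) = sg * (Mr * A) + k * (sg * (Mr1 * Dr B) + g * (Mr1 * B))"
    and stp: "sg * (sj * F J) + k * (sg * Dr (sj * G J) + g * (sj * G J)) = (sg * sj) * F (J + 1)"
    and dM: "Dr (Mr1 * B) = Mr1 * Dr B"
  shows "Mr * (sg * (A + Dr B) + g * B) = (sg * sj) * F (J + 1)"
proof -
  have "Mr * (sg * (A + Dr B) + g * B) = sg * (Mr * A) + k * (sg * (Mr1 * Dr B) + g * (Mr1 * B))"
    by (rule rearr)
  also have "\<dots> = sg * (sj * F J) + k * (sg * Dr (sj * G J) + g * (sj * G J))"
    by (simp only: hA dM[symmetric] hB)
  also have "\<dots> = (sg * sj) * F (J + 1)" by (rule stp)
  finally show ?thesis .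
qed

lemma central_of_unit_mult:
  assumes u: "is_unit_ring c" and cc: "central c" and e: "c * A = Z" and cz: "central Z"
  shows "central A"
proof -
  have "A = rinv c * Z" using e rinv_mult_cancel2[OF u, of A] by simp
  then show ?thesis using central_rinv[OF cc u] cz by simp
qed

lemma dpow:
  fixes Dr :: "'a::ring_1 \<Rightarrow> 'a"
  assumes Der: "is_derivation Dr" and cs: "central sg" "central y0" and dsg: "Dr sg = - (sg * y0)"
  shows "Dr (sg ^ j) = - (of_nat j * sg ^ j * y0)"
proof (induction j)
  case 0 then show ?case by (simp add: der_rules[OF Der])
next
  case (Suc j)
  have "Dr (sg ^ Suc j) = - (sg * y0) * sg ^ j + sg * (- (of_nat j * sg ^ j * y0))"
    by (simp add: der_rules[OF Der] dsg Suc)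
  also have "\<dots> = - ((of_nat j + 1) * (sg * sg ^ j) * y0)"
    by (rule dpow_step) (simp_all add: cs)
  finally show ?case by (simp add: add.commute)
qed

lemma R_closed:
  fixes Dr :: "'a::ring_1 \<Rightarrow> 'a"
  assumes QAlg: "\<And>m::nat. m > 0 \<Longrightarrow> is_unit_ring (of_nat m :: 'a)"
    and Der: "is_derivation Dr"
    and cs: "central sg" "central h" "central y0" "central y1" "central y2" "central y3"
    and dh: "Dr h = 0" and dsg: "Dr sg = - (sg * y0)"
    and dy: "Dr y0 = y1" "Dr y1 = y2" "Dr y2 = y3"
    and g: "g = h * sg * y0"
    and R: "R = op_pow1 (\<lambda>x. Dr x + bq * x - x * bq) sg g"
  shows "R j j = sg ^ j \<and>
    (1 \<le> j \<longrightarrow> 2 * R j (j - 1) = sg ^ j * Bt1 (of_nat j) h y0) \<and>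
    (2 \<le> j \<longrightarrow> 24 * R j (j - 2) = sg ^ j * Bt2 (of_nat j) h y0 y1) \<and>
    (3 \<le> j \<longrightarrow> 48 * R j (j - 3) = sg ^ j * Bt3 (of_nat j) h y0 y1 y2) \<and>
    (4 \<le> j \<longrightarrow> 5760 * R j (j - 4) = sg ^ j * Bt4 (of_nat j) h y0 y1 y2 y3)"
proof (induction j)
  case 0
  have X0: "(\<lambda>x. Dr x + bq * x - x * bq) 0 = 0" by (simp add: der_rules[OF Der])
  show ?case unfolding R by (simp add: op_pow1_top[where X="\<lambda>x. Dr x + bq * x - x * bq", OF X0])
next
  case (Suc j)
  define X where "X = (\<lambda>x. Dr x + bq * x - x * bq)"
  have X0: "X 0 = 0" by (simp add: X_def der_rules[OF Der])
  have Xc: "\<And>x. central x \<Longrightarrow> X x = Dr x" by (simp add: X_def central_def)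
  have RS: "\<And>m. R (Suc j) m = sg * ((if m = 0 then 0 else R j (m - 1)) + X (R j m)) + g * R j m"
    unfolding R X_def by (simp add: op_pow1_Suc op_mul1_def)
  define J where "J = (of_nat j :: 'a)"
  define sj where "sj = sg ^ j"
  have cJ: "central J" and csj: "central sj" using cs by (simp_all add: J_def sj_def)
  have dJ: "Dr J = 0" by (simp add: J_def der_rules[OF Der])
  have dsj: "Dr sj = - (J * sj * y0)" unfolding sj_def J_def by (rule dpow[OF Der cs(1) cs(3) dsg])
  have SJ: "of_nat (Suc j) = J + 1" by (simp add: J_def add.commute)
  have sgsj: "sg ^ Suc j = sg * sj" by (simp add: sj_def)
  have u2: "is_unit_ring (2::'a)" and u24: "is_unit_ring (24::'a)" and u48: "is_unit_ring (48::'a)"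
    and u5760: "is_unit_ring (5760::'a)"
    using QAlg[of 2] QAlg[of 24] QAlg[of 48] QAlg[of 5760] by simp_all
  note IH = Suc.IH[folded J_def sj_def]
  have dnum: "\<And>c B. Dr (numeral c * B) = numeral c * Dr B" "\<And>B. Dr (1 * B) = 1 * Dr B"
    by (simp_all add: der_rules[OF Der])
  have B0c: "central (R j j)" using IH cs by (simp add: sj_def)
  have top: "R (Suc j) (Suc j) = sg ^ Suc j"
    unfolding R by (rule op_pow1_top) (simp add: der_rules[OF Der])
  have C1: "1 \<le> Suc j \<Longrightarrow> 2 * R (Suc j) (Suc j - 1) = sg ^ Suc j * (Bt1 (of_nat (Suc j)) h y0)"
  proof -
    assume rj: "1 \<le> Suc j"
    define A where "A = (if 1 \<le> j then R j (j - 1) else 0)"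
    define B where "B = R j (j - 0)"
    have hA: "2 * A = sj * (Bt1 J h y0)"
    proof (cases "1 \<le> j")
      case True then show ?thesis using IH by (simp add: A_def)
    next
      case False then have "j = 0" using rj by simp
      then show ?thesis using Beval1[of h y0] cs by (simp add: A_def J_def)
    qed
    have hB: "1 * B = sj * 1" using IH rj by (simp add: B_def)
    have cA: "central A" by (rule central_of_unit_mult[OF u2 _ hA]) (simp_all add: csj cJ cs Bt1_central)
    have cB: "central B" using B0c by (simp add: B_def)
    have eq: "R (Suc j) (Suc j - 1) = sg * (A + Dr B) + g * B"
    proof (cases "1 \<le> j")
      case True
      then have "Suc j - 1 \<noteq> 0" "Suc j - 1 - 1 = j - 1" "Suc j - 1 = j - 0" by auto
      then show ?thesis using RS[of "Suc j - 1"] Xc[OF cB] True by (simp add: A_def B_def)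
    next
      case False
      then have "Suc j - 1 = 0" "j - 0 = 0" using rj by auto
      then show ?thesis using RS[of "Suc j - 1"] Xc[OF cB] False by (simp add: A_def B_def)
    qed
    have cg: "central (h * sg * y0)" using cs by simp
    have "2 * (sg * (A + Dr B) + (h * sg * y0) * B) = (sg * sj) * (Bt1 (J + 1) h y0)"
      by (rule gen_step[where F="\<lambda>J. Bt1 J h y0" and G="\<lambda>J. 1", OF hA hB
          Brearr1[OF cs(1) cA der_central[OF Der cB] cg cB]
          Bstep1[OF Der cs(1) csj cJ cs(2-6) dJ dh dsj dy] dnum(2)])
    then show ?thesis unfolding eq sgsj SJ g .
  qed
  have C2: "2 \<le> Suc j \<Longrightarrow> 24 * R (Suc j) (Suc j - 2) = sg ^ Suc j * (Bt2 (of_nat (Suc j)) h y0 y1)"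
  proof -
    assume rj: "2 \<le> Suc j"
    define A where "A = (if 2 \<le> j then R j (j - 2) else 0)"
    define B where "B = R j (j - 1)"
    have hA: "24 * A = sj * (Bt2 J h y0 y1)"
    proof (cases "2 \<le> j")
      case True then show ?thesis using IH by (simp add: A_def)
    next
      case False then have "j = 1" using rj by simp
      then show ?thesis using Beval2[of h y0 y1] cs by (simp add: A_def J_def)
    qed
    have hB: "2 * B = sj * (Bt1 J h y0)" using IH rj by (simp add: B_def)
    have cA: "central A" by (rule central_of_unit_mult[OF u24 _ hA]) (simp_all add: csj cJ cs Bt2_central)
    have cB: "central B" by (rule central_of_unit_mult[OF u2 _ hB]) (simp_all add: csj cJ cs Bt1_central)
    have eq: "R (Suc j) (Suc j - 2) = sg * (A + Dr B) + g * B"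
    proof (cases "2 \<le> j")
      case True
      then have "Suc j - 2 \<noteq> 0" "Suc j - 2 - 1 = j - 2" "Suc j - 2 = j - 1" by auto
      then show ?thesis using RS[of "Suc j - 2"] Xc[OF cB] True by (simp add: A_def B_def)
    next
      case False
      then have "Suc j - 2 = 0" "j - 1 = 0" using rj by auto
      then show ?thesis using RS[of "Suc j - 2"] Xc[OF cB] False by (simp add: A_def B_def)
    qed
    have cg: "central (h * sg * y0)" using cs by simp
    have "24 * (sg * (A + Dr B) + (h * sg * y0) * B) = (sg * sj) * (Bt2 (J + 1) h y0 y1)"
      by (rule gen_step[where F="\<lambda>J. Bt2 J h y0 y1" and G="\<lambda>J. Bt1 J h y0", OF hA hB
          Brearr2[OF cs(1) cA der_central[OF Der cB] cg cB]
          Bstep2[OF Der cs(1) csj cJ cs(2-6) dJ dh dsj dy] dnum(1)])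
    then show ?thesis unfolding eq sgsj SJ g .
  qed
  have C3: "3 \<le> Suc j \<Longrightarrow> 48 * R (Suc j) (Suc j - 3) = sg ^ Suc j * (Bt3 (of_nat (Suc j)) h y0 y1 y2)"
  proof -
    assume rj: "3 \<le> Suc j"
    define A where "A = (if 3 \<le> j then R j (j - 3) else 0)"
    define B where "B = R j (j - 2)"
    have hA: "48 * A = sj * (Bt3 J h y0 y1 y2)"
    proof (cases "3 \<le> j")
      case True then show ?thesis using IH by (simp add: A_def)
    next
      case False then have "j = 2" using rj by simp
      then show ?thesis using Beval3[of h y0 y1 y2] cs by (simp add: A_def J_def)
    qed
    have hB: "24 * B = sj * (Bt2 J h y0 y1)" using IH rj by (simp add: B_def)
    have cA: "central A" by (rule central_of_unit_mult[OF u48 _ hA]) (simp_all add: csj cJ cs Bt3_central)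
    have cB: "central B" by (rule central_of_unit_mult[OF u24 _ hB]) (simp_all add: csj cJ cs Bt2_central)
    have eq: "R (Suc j) (Suc j - 3) = sg * (A + Dr B) + g * B"
    proof (cases "3 \<le> j")
      case True
      then have "Suc j - 3 \<noteq> 0" "Suc j - 3 - 1 = j - 3" "Suc j - 3 = j - 2" by auto
      then show ?thesis using RS[of "Suc j - 3"] Xc[OF cB] True by (simp add: A_def B_def)
    next
      case False
      then have "Suc j - 3 = 0" "j - 2 = 0" using rj by auto
      then show ?thesis using RS[of "Suc j - 3"] Xc[OF cB] False by (simp add: A_def B_def)
    qed
    have cg: "central (h * sg * y0)" using cs by simp
    have "48 * (sg * (A + Dr B) + (h * sg * y0) * B) = (sg * sj) * (Bt3 (J + 1) h y0 y1 y2)"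
      by (rule gen_step[where F="\<lambda>J. Bt3 J h y0 y1 y2" and G="\<lambda>J. Bt2 J h y0 y1", OF hA hB
          Brearr3[OF cs(1) cA der_central[OF Der cB] cg cB]
          Bstep3[OF Der cs(1) csj cJ cs(2-6) dJ dh dsj dy] dnum(1)])
    then show ?thesis unfolding eq sgsj SJ g .
  qed
  have C4: "4 \<le> Suc j \<Longrightarrow> 5760 * R (Suc j) (Suc j - 4) = sg ^ Suc j * (Bt4 (of_nat (Suc j)) h y0 y1 y2 y3)"
  proof -
    assume rj: "4 \<le> Suc j"
    define A where "A = (if 4 \<le> j then R j (j - 4) else 0)"
    define B where "B = R j (j - 3)"
    have hA: "5760 * A = sj * (Bt4 J h y0 y1 y2 y3)"
    proof (cases "4 \<le> j")
      case True then show ?thesis using IH by (simp add: A_def)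
    next
      case False then have "j = 3" using rj by simp
      then show ?thesis using Beval4[of h y0 y1 y2 y3] cs by (simp add: A_def J_def)
    qed
    have hB: "48 * B = sj * (Bt3 J h y0 y1 y2)" using IH rj by (simp add: B_def)
    have cA: "central A" by (rule central_of_unit_mult[OF u5760 _ hA]) (simp_all add: csj cJ cs Bt4_central)
    have cB: "central B" by (rule central_of_unit_mult[OF u48 _ hB]) (simp_all add: csj cJ cs Bt3_central)
    have eq: "R (Suc j) (Suc j - 4) = sg * (A + Dr B) + g * B"
    proof (cases "4 \<le> j")
      case True
      then have "Suc j - 4 \<noteq> 0" "Suc j - 4 - 1 = j - 4" "Suc j - 4 = j - 3" by auto
      then show ?thesis using RS[of "Suc j - 4"] Xc[OF cB] True by (simp add: A_def B_def)
    next
      case False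
      then have "Suc j - 4 = 0" "j - 3 = 0" using rj by auto
      then show ?thesis using RS[of "Suc j - 4"] Xc[OF cB] False by (simp add: A_def B_def)
    qed
    have cg: "central (h * sg * y0)" using cs by simp
    have "5760 * (sg * (A + Dr B) + (h * sg * y0) * B) = (sg * sj) * (Bt4 (J + 1) h y0 y1 y2 y3)"
      by (rule gen_step[where F="\<lambda>J. Bt4 J h y0 y1 y2 y3" and G="\<lambda>J. Bt3 J h y0 y1 y2", OF hA hB
          Brearr4[OF cs(1) cA der_central[OF Der cB] cg cB]
          Bstep4[OF Der cs(1) csj cJ cs(2-6) dJ dh dsj dy] dnum(1)])
    then show ?thesis unfolding eq sgsj SJ g .
  qed
  show ?case using top C1 C2 C3 C4 by simp
qed

lemma K2c:
  fixes C2 X2 N h y0 y1 r2 r6 :: "'a::ring_1"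
  assumes QAlg: "\<And>m::nat. m > 0 \<Longrightarrow> is_unit_ring (of_nat m :: 'a)"
    and cs: "central C2" "central X2" "central N" "central h" "central y0" "central y1" "central r2" "central r6"
    and rel: "24 * X2 = Bt2 N h y0 y1" "2 * C2 = N * (N - 1)" "6 * r6 = 1" "2 * r2 = 1" "2 * h = N - 1"
  shows "C2 * ((N + 1) * r6 * ((y1 + y0 * y0) - 3 * r2 * y0 ^ 2)) = X2"
proof -
  have cert: "2304 * ((C2 * ((N + 1) * r6 * ((y1 + y0 * y0) - 3 * r2 * y0 ^ 2))) - (X2)) = 96 * (24 * X2 - (Bt2 N h y0 y1)) * (- 1) + 48 * (2 * C2 - (N * (N - 1))) * (24 * r6 * y1 + 24 * N * r6 * y1 + 24 * r6 * y0 * y0 + 24 * N * r6 * y0 * y0 - 72 * r2 * r6 * y0 * y0 - 72 * N * r2 * r6 * y0 * y0) + 8 * (6 * r6 - (1)) * (- 24 * N * y1 - 24 * N * y0 * y0 + 72 * N * r2 * y0 * y0 + 24 * N * N * N * y1 + 24 * N * N * N * y0 * y0 - 72 * N * N * N * r2 * y0 * y0) + 4 * (2 * r2 - (1)) * (72 * N * y0 * y0 - 72 * N * N * N * y0 * y0) + 1 * (2 * h - (N - 1)) * (576 * N * y1 + 288 * N * y0 * y0 - 576 * N * N * y1 + 576 * N * h * y0 * y0 - 576 * N * N * y0 * y0 - 576 * N * N * h * y0 * y0 + 288 * N * N * N * y0 * y0)"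
  proof -
    note tr = transferK[OF cs central_0 central_0 central_0 central_0]
    define \<Phi> where "\<Phi> = TRK C2 X2 N h y0 y1 r2 r6 (0::'a) 0 0 0"
    note tr' = tr[folded \<Phi>_def]
    note fo = chom_fold[OF tr'(1)]
    show ?thesis
      apply (simp only: Bt1_def Bt2_def Bt3_def Bt4_def power2_eq_square)
      apply (simp only: tr'(2-9)[symmetric])
      apply (simp only: fo)
      apply (rule arg_cong[where f="\<Phi>"])
      apply algebra
      done
  qed
  have "2304 * ((C2 * ((N + 1) * r6 * ((y1 + y0 * y0) - 3 * r2 * y0 ^ 2))) - (X2)) = 0"
    unfolding cert using rel by simp
  moreover have "is_unit_ring (2304::'a)" using QAlg[of 2304] by simp
  ultimately show ?thesis using unit_cancel_left[of "2304::'a" "(C2 * ((N + 1) * r6 * ((y1 + y0 * y0) - 3 * r2 * y0 ^ 2))) - (X2)" 0] by simp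
qed

lemma K3c:
  fixes C3 X3 N h y0 y1 y2 r2 r4 :: "'a::ring_1" and Dr :: "'a \<Rightarrow> 'a"
  assumes QAlg: "\<And>m::nat. m > 0 \<Longrightarrow> is_unit_ring (of_nat m :: 'a)"
    and cs: "central C3" "central X3" "central N" "central h" "central y0" "central y1" "central y2" "central r2" "central r4"
    and rel: "48 * X3 = Bt3 N h y0 y1 y2" "6 * C3 = N * (N - 1) * (N - 2)" "4 * r4 = 1" "2 * r2 = 1" "2 * h = N - 1"
    and Der: "is_derivation Dr" and dy: "Dr y0 = y1" "Dr y1 = y2" "Dr y2 = y3" and dr2: "Dr r2 = 0"
  shows "C3 * ((N + 1) * r4 * Dr ((y1 + y0 * y0) - 3 * r2 * y0 ^ 2)) = X3"
proof -
  have cert: "18432 * ((C3 * ((N + 1) * r4 * Dr ((y1 + y0 * y0) - 3 * r2 * y0 ^ 2))) - (X3)) = 384 * (48 * X3 - (Bt3 N h y0 y1 y2)) * (- 1) + 64 * (6 * C3 - (N * (N - 1) * (N - 2))) * (48 * r4 * y2 + 48 * N * r4 * y2 + 96 * r4 * y0 * y1 + 96 * N * r4 * y0 * y1 - 288 * r2 * r4 * y0 * y1 - 288 * N * r2 * r4 * y0 * y1) + 16 * (4 * r4 - (1)) * (96 * N * y2 + 192 * N * y0 * y1 - 48 * N * N * y2 - 576 * N * r2 * y0 * y1 - 96 * N * N * y0 * y1 - 96 * N * N * N * y2 + 288 * N * N * r2 * y0 * y1 - 192 * N * N * N * y0 * y1 + 48 * N * N * N * N * y2 + 576 * N * N * N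 * r2 * y0 * y1 + 96 * N * N * N * N * y0 * y1 - 288 * N * N * N * N * r2 * y0 * y1) + 8 * (2 * r2 - (1)) * (- 576 * N * y0 * y1 + 288 * N * N * y0 * y1 + 576 * N * N * N * y0 * y1 - 288 * N * N * N * N * y0 * y1) + 1 * (2 * h - (N - 1)) * (- 3072 * N * y2 - 6144 * N * y0 * y1 + 4608 * N * N * y2 - 9216 * N * h * y0 * y1 + 12288 * N * N * y0 * y1 - 1536 * N * N * N * y2 - 3072 * N * h * y0 * y0 * y0 + 13824 * N * N * h * y0 * y1 + 2304 * N * N * y0 * y0 * y0 - 7680 * N * N * N * y0 * y1 - 3072 * N * h * h * y0 * y0 * y0 + 7680 * N * N * h * y0 * y0 * y0 - 4608 * N * N * N * h * y0 * y1 - 4224 * N * N * N * y0 * y0 * y0 + 1536 * N * N * N * N * y0 * y1 + 4608 * N * N * h * h * y0 * y0 * y0 - 6144 * N * N * N * h * y0 * y0 * y0 + 2304 * N * N * N * N * y0 * y0 * y0 - 1536 * N * N * N * h * h * y0 * y0 * y0 + 1536 * N * N * N * N * h * y0 * y0 * y0 - 384 * N * N * N * N * N * y0 * y0 * y0)"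
  proof -
    note tr = transferK[OF cs central_0 central_0 central_0]
    define \<Phi> where "\<Phi> = TRK C3 X3 N h y0 y1 y2 r2 r4 (0::'a) 0 0"
    note tr' = tr[folded \<Phi>_def]
    note fo = chom_fold[OF tr'(1)]
    show ?thesis
      apply (simp only: Bt1_def Bt2_def Bt3_def Bt4_def power2_eq_square der_rules[OF Der] dy dr2)
      apply (simp only: tr'(2-10)[symmetric])
      apply (simp only: fo)
      apply (rule arg_cong[where f="\<Phi>"])
      apply algebra
      done
  qed
  have "18432 * ((C3 * ((N + 1) * r4 * Dr ((y1 + y0 * y0) - 3 * r2 * y0 ^ 2))) - (X3)) = 0"
    unfolding cert using rel by simp
  moreover have "is_unit_ring (18432::'a)" using QAlg[of 18432] by simp
  ultimately show ?thesis using unit_cancel_left[of "18432::'a" "(C3 * ((N + 1) * r4 * Dr ((y1 + y0 * y0) - 3 * r2 * y0 ^ 2))) - (X3)" 0] by simp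
qed

lemma K32:
  fixes C2 C3 Z N h y0 lp :: "'a::ring_1"
  assumes QAlg: "\<And>m::nat. m > 0 \<Longrightarrow> is_unit_ring (of_nat m :: 'a)"
    and cs: "central C2" "central C3" "central Z" "central N" "central h" "central y0" "central lp"
    and rel: "2 * Z = lp ^ 2 * Bt1 (N - 2) h y0" "6 * C3 = N * (N - 1) * (N - 2)" "2 * C2 = N * (N - 1)" "2 * h = N - 1"
  shows "C3 * (3 * lp * (y0 * lp)) = C2 * Z"
proof -
  have cert: "48 * ((C3 * (3 * lp * (y0 * lp))) - (C2 * Z)) = 24 * (2 * Z - (lp ^ 2 * Bt1 (N - 2) h y0)) * (- C2) + 4 * (6 * C3 - (N * (N - 1) * (N - 2))) * (6 * lp * lp * y0) + 2 * (2 * C2 - (N * (N - 1))) * (36 * lp * lp * y0 - 30 * N * lp * lp * y0 + 24 * h * lp * lp * y0 - 12 * N * h * lp * lp * y0 + 6 * N * N * lp * lp * y0) + 1 * (2 * h - (N - 1)) * (- 24 * N * lp * lp * y0 + 36 * N * N * lp * lp * y0 - 12 * N * N * N * lp * lp * y0)"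
  proof -
    note tr = transferK[OF cs central_0 central_0 central_0 central_0 central_0]
    define \<Phi> where "\<Phi> = TRK C2 C3 Z N h y0 lp (0::'a) 0 0 0 0"
    note tr' = tr[folded \<Phi>_def]
    note fo = chom_fold[OF tr'(1)]
    show ?thesis
      apply (simp only: Bt1_def Bt2_def Bt3_def Bt4_def power2_eq_square)
      apply (simp only: tr'(2-8)[symmetric])
      apply (simp only: fo)
      apply (rule arg_cong[where f="\<Phi>"])
      apply algebra
      done
  qed
  have "48 * ((C3 * (3 * lp * (y0 * lp))) - (C2 * Z)) = 0"
    unfolding cert using rel by simp
  moreover have "is_unit_ring (48::'a)" using QAlg[of 48] by simp
  ultimately show ?thesis using unit_cancel_left[of "48::'a" "(C3 * (3 * lp * (y0 * lp))) - (C2 * Z)" 0] by simp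
qed

lemma K4c:
  fixes C4 X4 N h y0 y1 y2 y3 r2 r10 r60 :: "'a::ring_1" and Dr :: "'a \<Rightarrow> 'a"
  assumes QAlg: "\<And>m::nat. m > 0 \<Longrightarrow> is_unit_ring (of_nat m :: 'a)"
    and cs: "central C4" "central X4" "central N" "central h" "central y0" "central y1" "central y2" "central y3" "central r2" "central r10" "central r60"
    and rel: "5760 * X4 = Bt4 N h y0 y1 y2 y3" "24 * C4 = N * (N - 1) * (N - 2) * (N - 3)" "10 * r10 = 1" "60 * r60 = 1" "2 * r2 = 1" "2 * h = N - 1"
    and Der: "is_derivation Dr" and dy: "Dr y0 = y1" "Dr y1 = y2" "Dr y2 = y3" and dr2: "Dr r2 = 0"
  shows "C4 * (3 * (N + 1) * r10 * Dr (Dr ((y1 + y0 * y0) - 3 * r2 * y0 ^ 2)) + (N + 1) * (5 * N + 7) * r60 * ((y1 + y0 * y0) - 3 * r2 * y0 ^ 2) ^ 2) = X4"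
proof -
  have cert: "5308416000 * ((C4 * (3 * (N + 1) * r10 * Dr (Dr ((y1 + y0 * y0) - 3 * r2 * y0 ^ 2)) + (N + 1) * (5 * N + 7) * r60 * ((y1 + y0 * y0) - 3 * r2 * y0 ^ 2) ^ 2)) - (X4)) = 921600 * (5760 * X4 - (Bt4 N h y0 y1 y2 y3)) * (- 1) + 38400 * (24 * C4 - (N * (N - 1) * (N - 2) * (N - 3))) * (17280 * r10 * y3 + 17280 * N * r10 * y3 + 34560 * r10 * y0 * y2 + 34560 * r10 * y1 * y1 + 40320 * r60 * y1 * y1 + 34560 * N * r10 * y0 * y2 + 34560 * N * r10 * y1 * y1 + 69120 * N * r60 * y1 * y1 - 103680 * r10 * r2 * y0 * y2 - 103680 * r10 * r2 * y1 * y1 + 80640 * r60 * y0 * y0 * y1 - 103680 * N * r10 * r2 * y0 * y2 - 103680 * N * r10 * r2 * y1 * y1 + 138240 * N * r60 * y0 * y0 * y1 + 28800 * N * N * r60 * y1 * y1 - 241920 * r2 * r60 * y0 * y0 * y1 + 40320 * r60 * y0 * y0 * y0 * y0 - 414720 * N * r2 * r60 * y0 * y0 * y1 + 69120 * N * r60 * y0 * y0 * y0 * y0 + 57600 * N * N * r60 * y0 * y0 * y1 - 241920 * r2 * r60 * y0 * y0 * y0 * y0 - 414720 * N * r2 * r60 * y0 * y0 * y0 * y0 - 172800 * N * N * r2 * r60 * y0 * y0 * y1 + 28800 * N * N * r60 * y0 * y0 * y0 * y0 + 362880 * r2 * r2 * r60 * y0 * y0 * y0 * y0 + 622080 * N *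 r2 * r2 * r60 * y0 * y0 * y0 * y0 - 172800 * N * N * r2 * r60 * y0 * y0 * y0 * y0 + 259200 * N * N * r2 * r2 * r60 * y0 * y0 * y0 * y0) + 3840 * (10 * r10 - (1)) * (- 103680 * N * y3 - 207360 * N * y0 * y2 - 207360 * N * y1 * y1 + 86400 * N * N * y3 + 622080 * N * r2 * y0 * y2 + 622080 * N * r2 * y1 * y1 + 172800 * N * N * y0 * y2 + 172800 * N * N * y1 * y1 + 86400 * N * N * N * y3 - 518400 * N * N * r2 * y0 * y2 - 518400 * N * N * r2 * y1 * y1 + 172800 * N * N * N * y0 * y2 + 172800 * N * N * N * y1 * y1 - 86400 * N * N * N * N * y3 - 518400 * N * N * N * r2 * y0 * y2 - 518400 * N * N * N * r2 * y1 * y1 - 172800 * N * N * N * N * y0 * y2 - 172800 * N * N * N * N * y1 * y1 + 17280 * N * N * N * N * N * y3 + 518400 * N * N * N * N * r2 * y0 * y2 + 518400 * N * N * N * N * r2 * y1 * y1 + 34560 * N * N * N * N * N * y0 * y2 + 34560 * N * N * N * N * N * y1 * y1 - 103680 * N * N * N * N * N * r2 * y0 * y2 - 103680 * N * N * N * N * N * r2 * y1 * y1) + 64 * (60 * r60 - (1)) * (- 2419200 * N * y1 * y1 - 4838400 * N * y0 * y0 * y1 + 288000 * N * N * y1 * y1 + 14515200 * N * r2 * y0 * y0 * y1 - 2419200 * N * y0 * y0 * y0 * y0 + 576000 * N * N * y0 * y0 * y1 + 3456000 * N * N * N * y1 * y1 + 14515200 * N * r2 * y0 * y0 * y0 * y0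 - 1728000 * N * N * r2 * y0 * y0 * y1 + 288000 * N * N * y0 * y0 * y0 * y0 + 6912000 * N * N * N * y0 * y0 * y1 - 576000 * N * N * N * N * y1 * y1 - 21772800 * N * r2 * r2 * y0 * y0 * y0 * y0 - 1728000 * N * N * r2 * y0 * y0 * y0 * y0 - 20736000 * N * N * N * r2 * y0 * y0 * y1 + 3456000 * N * N * N * y0 * y0 * y0 * y0 - 1152000 * N * N * N * N * y0 * y0 * y1 - 1036800 * N * N * N * N * N * y1 * y1 + 2592000 * N * N * r2 * r2 * y0 * y0 * y0 * y0 - 20736000 * N * N * N * r2 * y0 * y0 * y0 * y0 + 3456000 * N * N * N * N * r2 * y0 * y0 * y1 - 576000 * N * N * N * N * y0 * y0 * y0 * y0 - 2073600 * N * N * N * N * N * y0 * y0 * y1 + 288000 * N * N * N * N * N * N * y1 * y1 + 31104000 * N * N * N * r2 * r2 * y0 * y0 * y0 * y0 + 3456000 * N * N * N * N * r2 * y0 * y0 * y0 * y0 + 6220800 * N * N * N * N * N * r2 * y0 * y0 * y1 - 1036800 * N * N * N * N * N * y0 * y0 * y0 * y0 + 576000 * N * N * N * N * N * N * y0 * y0 * y1 - 5184000 * N * N * N * N * r2 * r2 * y0 * y0 * y0 * y0 + 6220800 * N * N * N * N * N * r2 * y0 * y0 * y0 * y0 - 1728000 * N * N * N * N * N * N * r2 * y0 * y0 * y1 + 288000 * N * N * N * N * N * N * y0 * y0 * y0 * y0 - 9331200 * N * N * N * N * N * r2 * r2 * y0 * y0 * y0 * y0 - 1728000 * N * N * N *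 N * N * N * r2 * y0 * y0 * y0 * y0 + 2592000 * N * N * N * N * N * N * r2 * r2 * y0 * y0 * y0 * y0) + 16 * (2 * r2 - (1)) * (74649600 * N * y0 * y2 + 74649600 * N * y1 * y1 + 29030400 * N * y0 * y0 * y1 - 62208000 * N * N * y0 * y2 - 62208000 * N * N * y1 * y1 + 7257600 * N * y0 * y0 * y0 * y0 - 3456000 * N * N * y0 * y0 * y1 - 62208000 * N * N * N * y0 * y2 - 62208000 * N * N * N * y1 * y1 - 43545600 * N * r2 * y0 * y0 * y0 * y0 - 864000 * N * N * y0 * y0 * y0 * y0 - 41472000 * N * N * N * y0 * y0 * y1 + 62208000 * N * N * N * N * y0 * y2 + 62208000 * N * N * N * N * y1 * y1 + 5184000 * N * N * r2 * y0 * y0 * y0 * y0 - 10368000 * N * N * N * y0 * y0 * y0 * y0 + 6912000 * N * N * N * N * y0 * y0 * y1 - 12441600 * N * N * N * N * N * y0 * y2 - 12441600 * N * N * N * N * N * y1 * y1 + 62208000 * N * N * N * r2 * y0 * y0 * y0 * y0 + 1728000 * N * N * N * N * y0 * y0 * y0 * y0 + 12441600 * N * N * N * N * N * y0 * y0 * y1 - 10368000 * N * N * N * N * r2 * y0 * y0 * y0 * y0 + 3110400 * N * N * N * N * N * y0 * y0 * y0 * y0 - 3456000 * N * N * N * N * N * N * y0 * y0 * y1 - 18662400 * N * N * N * N * N * r2 * y0 * y0 * y0 * y0 - 864000 * N * N * N * N * N * N * y0 * y0 * y0 * y0 + 5184000 * N * N * N * N * N * N * r2 * y0 * y0 * y0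 * y0) + 1 * (2 * h - (N - 1)) * (663552000 * N * y3 + 1990656000 * N * y0 * y2 + 1658880000 * N * y1 * y1 - 1216512000 * N * N * y3 + 2654208000 * N * h * y0 * y2 + 1990656000 * N * h * y1 * y1 + 331776000 * N * y0 * y0 * y1 - 4313088000 * N * N * y0 * y2 - 3373056000 * N * N * y1 * y1 + 663552000 * N * N * N * y3 + 4644864000 * N * h * y0 * y0 * y1 - 82944000 * N * y0 * y0 * y0 * y0 - 4866048000 * N * N * h * y0 * y2 - 3649536000 * N * N * h * y1 * y1 - 3594240000 * N * N * y0 * y0 * y1 + 3207168000 * N * N * N * y0 * y2 + 2267136000 * N * N * N * y1 * y1 - 110592000 * N * N * N * N * y3 + 165888000 * N * h * y0 * y0 * y0 * y0 + 3981312000 * N * h * h * y0 * y0 * y1 - 11833344000 * N * N * h * y0 * y0 * y1 - 96768000 * N * N * y0 * y0 * y0 * y0 + 2654208000 * N * N * N * h * y0 * y2 + 1990656000 * N * N * N * h * y1 * y1 + 6469632000 * N * N * N * y0 * y0 * y1 - 995328000 * N * N * N * N * y0 * y2 - 608256000 * N * N * N * N * y1 * y1 + 995328000 * N * h * h * y0 * y0 * y0 * y0 - 1631232000 * N * N * h * y0 * y0 * y0 * y0 - 7299072000 * N * N * h * h * y0 * y0 * y1 + 10727424000 * N * N * N * h * y0 * y0 * y1 + 787968000 * N * N * N * y0 * y0 * y0 * y0 - 442368000 * N * N * N * N * h * y0 * y2 - 331776000 * N * N * N * N * h * y1 * y1 - 4257792000 * N * N * N * N * y0 * y0 * y1 +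 110592000 * N * N * N * N * N * y0 * y2 + 55296000 * N * N * N * N * N * y1 * y1 + 663552000 * N * h * h * h * y0 * y0 * y0 * y0 - 2820096000 * N * N * h * h * y0 * y0 * y0 * y0 + 3096576000 * N * N * N * h * y0 * y0 * y0 * y0 + 3981312000 * N * N * N * h * h * y0 * y0 * y1 - 4091904000 * N * N * N * N * h * y0 * y0 * y1 - 1078272000 * N * N * N * N * y0 * y0 * y0 * y0 + 1161216000 * N * N * N * N * N * y0 * y0 * y1 - 1216512000 * N * N * h * h * h * y0 * y0 * y0 * y0 + 2820096000 * N * N * N * h * h * y0 * y0 * y0 * y0 - 2267136000 * N * N * N * N * h * y0 * y0 * y0 * y0 - 663552000 * N * N * N * N * h * h * y0 * y0 * y1 + 552960000 * N * N * N * N * N * h * y0 * y0 * y1 + 608256000 * N * N * N * N * N * y0 * y0 * y0 * y0 - 110592000 * N * N * N * N * N * N * y0 * y0 * y1 + 663552000 * N * N * N * h * h * h * y0 * y0 * y0 * y0 - 1161216000 * N * N * N * N * h * h * y0 * y0 * y0 * y0 + 718848000 * N * N * N * N * N * h * y0 * y0 * y0 * y0 - 152064000 * N * N * N * N * N * N * y0 * y0 * y0 * y0 - 110592000 * N * N * N * N * h * h * h * y0 * y0 * y0 * y0 + 165888000 * N * N * N * N * N * h * h * y0 * y0 * y0 * y0 - 82944000 * N * N * N * N * N * N * h * y0 * y0 * y0 * y0 + 13824000 * N * N * N * N * N * N * N * y0 * y0 * y0 * y0)"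
  proof -
    note tr = transferK[OF cs central_0]
    define \<Phi> where "\<Phi> = TRK C4 X4 N h y0 y1 y2 y3 r2 r10 r60 (0::'a)"
    note tr' = tr[folded \<Phi>_def]
    note fo = chom_fold[OF tr'(1)]
    show ?thesis
      apply (simp only: Bt1_def Bt2_def Bt3_def Bt4_def power2_eq_square der_rules[OF Der] dy dr2)
      apply (simp only: tr'(2-12)[symmetric])
      apply (simp only: fo)
      apply (rule arg_cong[where f="\<Phi>"])
      apply algebra
      done
  qed
  have "5308416000 * ((C4 * (3 * (N + 1) * r10 * Dr (Dr ((y1 + y0 * y0) - 3 * r2 * y0 ^ 2)) + (N + 1) * (5 * N + 7) * r60 * ((y1 + y0 * y0) - 3 * r2 * y0 ^ 2) ^ 2)) - (X4)) = 0"
    unfolding cert using rel by simp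
  moreover have "is_unit_ring (5308416000::'a)" using QAlg[of 5308416000] by simp
  ultimately show ?thesis using unit_cancel_left[of "5308416000::'a" "(C4 * (3 * (N + 1) * r10 * Dr (Dr ((y1 + y0 * y0) - 3 * r2 * y0 ^ 2)) + (N + 1) * (5 * N + 7) * r60 * ((y1 + y0 * y0) - 3 * r2 * y0 ^ 2) ^ 2)) - (X4)" 0] by simp
qed

lemma K42:
  fixes C2 C4 Z N h y0 y1 lp r2 :: "'a::ring_1"
  assumes QAlg: "\<And>m::nat. m > 0 \<Longrightarrow> is_unit_ring (of_nat m :: 'a)"
    and cs: "central C2" "central C4" "central Z" "central N" "central h" "central y0" "central y1" "central lp" "central r2"
    and rel: "24 * Z = lp ^ 2 * Bt2 (N - 2) h y0 y1" "24 * C4 = N * (N - 1) * (N - 2) * (N - 3)" "2 * C2 = N * (N - 1)" "2 * r2 = 1" "2 * h = N - 1"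
  shows "C4 * ((N + 5) * lp * ((y1 + y0 * y0) * lp) - 3 * r2 * (N - 1) * (y0 * lp) ^ 2) = C2 * Z"
proof -
  have cert: "9216 * ((C4 * ((N + 5) * lp * ((y1 + y0 * y0) * lp) - 3 * r2 * (N - 1) * (y0 * lp) ^ 2)) - (C2 * Z)) = 384 * (24 * Z - (lp ^ 2 * Bt2 (N - 2) h y0 y1)) * (- C2) + 16 * (24 * C4 - (N * (N - 1) * (N - 2) * (N - 3))) * (120 * lp * lp * y1 + 24 * N * lp * lp * y1 + 120 * lp * lp * y0 * y0 + 24 * N * lp * lp * y0 * y0 + 72 * lp * lp * r2 * y0 * y0 - 72 * N * lp * lp * r2 * y0 * y0) + 8 * (2 * C2 - (N * (N - 1))) * (- 2304 * lp * lp * y1 + 2496 * N * lp * lp * y1 - 1728 * h * lp * lp * y1 - 4032 * lp * lp * y0 * y0 + 1440 * N * h * lp * lp * y1 + 6096 * N * lp * lp * y0 * y0 - 864 * N * N * lp * lp * y1 - 5184 * h * lp * lp * y0 * y0 + 6048 * N * h * lp * lp * y0 * y0 - 288 * N * N * h * lp * lp * y1 - 3384 * N * N * lp * lp * y0 * y0 + 96 * N * N * N * lp * lp * y1 - 1728 * h * h * lp * lp * y0 * y0 + 1440 * N * h * h * lp * lp * y0 * y0 - 2304 * N * N * h * lp * lp * y0 * y0 + 816 * N * N * N * lp * lp * y0 * y0 - 288 * N * N * h * h * lp * lp * y0 * y0 + 288 * N * N * N * h * lp * lp * y0 * y0 - 72 * N * N * N * N * lp * lp * y0 * y0) + 4 *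 (2 * r2 - (1)) * (- 864 * N * lp * lp * y0 * y0 + 2448 * N * N * lp * lp * y0 * y0 - 2448 * N * N * N * lp * lp * y0 * y0 + 1008 * N * N * N * N * lp * lp * y0 * y0 - 144 * N * N * N * N * N * lp * lp * y0 * y0) + 1 * (2 * h - (N - 1)) * (6912 * N * lp * lp * y1 + 17280 * N * lp * lp * y0 * y0 - 12672 * N * N * lp * lp * y1 + 6912 * N * h * lp * lp * y0 * y0 - 35136 * N * N * lp * lp * y0 * y0 + 6912 * N * N * N * lp * lp * y1 - 12672 * N * N * h * lp * lp * y0 * y0 + 23616 * N * N * N * lp * lp * y0 * y0 - 1152 * N * N * N * N * lp * lp * y1 + 6912 * N * N * N * h * lp * lp * y0 * y0 - 6336 * N * N * N * N * lp * lp * y0 * y0 - 1152 * N * N * N * N * h * lp * lp * y0 * y0 + 576 * N * N * N * N * N * lp * lp * y0 * y0)"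
  proof -
    note tr = transferK[OF cs central_0 central_0 central_0]
    define \<Phi> where "\<Phi> = TRK C2 C4 Z N h y0 y1 lp r2 (0::'a) 0 0"
    note tr' = tr[folded \<Phi>_def]
    note fo = chom_fold[OF tr'(1)]
    show ?thesis
      apply (simp only: Bt1_def Bt2_def Bt3_def Bt4_def power2_eq_square)
      apply (simp only: tr'(2-10)[symmetric])
      apply (simp only: fo)
      apply (rule arg_cong[where f="\<Phi>"])
      apply algebra
      done
  qed
  have "9216 * ((C4 * ((N + 5) * lp * ((y1 + y0 * y0) * lp) - 3 * r2 * (N - 1) * (y0 * lp) ^ 2)) - (C2 * Z)) = 0"
    unfolding cert using rel by simp
  moreover have "is_unit_ring (9216::'a)" using QAlg[of 9216] by simp
  ultimately show ?thesis using unit_cancel_left[of "9216::'a" "(C4 * ((N + 5) * lp * ((y1 + y0 * y0) * lp) - 3 * r2 * (N - 1) * (y0 * lp) ^ 2)) - (C2 * Z)" 0] by simp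
qed

lemma K43:
  fixes C3 C4 Z N h y0 lp :: "'a::ring_1"
  assumes QAlg: "\<And>m::nat. m > 0 \<Longrightarrow> is_unit_ring (of_nat m :: 'a)"
    and cs: "central C3" "central C4" "central Z" "central N" "central h" "central y0" "central lp"
    and rel: "2 * Z = lp ^ 3 * Bt1 (N - 3) h y0" "24 * C4 = N * (N - 1) * (N - 2) * (N - 3)" "6 * C3 = N * (N - 1) * (N - 2)" "2 * h = N - 1"
  shows "C4 * (6 * lp ^ 2 * (y0 * lp)) = C3 * Z"
proof -
  have cert: "576 * ((C4 * (6 * lp ^ 2 * (y0 * lp))) - (C3 * Z)) = 288 * (2 * Z - (lp ^ 3 * Bt1 (N - 3) h y0)) * (- C3) + 12 * (24 * C4 - (N * (N - 1) * (N - 2) * (N - 3))) * (12 * lp * lp * lp * y0) + 2 * (6 * C3 - (N * (N - 1) * (N - 2))) * (288 * lp * lp * lp * y0 - 168 * N * lp * lp * lp * y0 + 144 * h * lp * lp * lp * y0 - 48 * N * h * lp * lp * lp * y0 + 24 * N * N * lp * lp * lp * y0) + 1 * (2 * h - (N - 1)) * (288 * N * lp * lp * lp * y0 - 528 * N * N * lp * lp * lp * y0 + 288 * N * N * N * lp * lp * lp * y0 - 48 * N * N * N * N * lp * lp * lp * y0)"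
  proof -
    note tr = transferK[OF cs central_0 central_0 central_0 central_0 central_0]
    define \<Phi> where "\<Phi> = TRK C3 C4 Z N h y0 lp (0::'a) 0 0 0 0"
    note tr' = tr[folded \<Phi>_def]
    note fo = chom_fold[OF tr'(1)]
    show ?thesis
      apply (simp only: Bt1_def Bt2_def Bt3_def Bt4_def power2_eq_square)
      apply (simp only: tr'(2-8)[symmetric])
      apply (simp only: fo)
      apply (rule arg_cong[where f="\<Phi>"])
      apply algebra
      done
  qed
  have "576 * ((C4 * (6 * lp ^ 2 * (y0 * lp))) - (C3 * Z)) = 0"
    unfolding cert using rel by simp
  moreover have "is_unit_ring (576::'a)" using QAlg[of 576] by simp
  ultimately show ?thesis using unit_cancel_left[of "576::'a" "(C4 * (6 * lp ^ 2 * (y0 * lp))) - (C3 * Z)" 0] by simp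
qed

lemma K1z:
  fixes N h y0 :: "'a::ring_1"
  assumes QAlg: "\<And>m::nat. m > 0 \<Longrightarrow> is_unit_ring (of_nat m :: 'a)"
    and cs: "central N" "central h" "central y0"
    and rel: "2 * h = N - 1"
  shows "Bt1 N h y0 = 0"
proof -
  have cert: "2 * ((Bt1 N h y0) - (0)) = 1 * (2 * h - (N - 1)) * (2 * N * y0)"
  proof -
    note tr = transferK[OF cs central_0 central_0 central_0 central_0 central_0 central_0 central_0 central_0 central_0]
    define \<Phi> where "\<Phi> = TRK N h y0 (0::'a) 0 0 0 0 0 0 0 0"
    note tr' = tr[folded \<Phi>_def]
    note fo = chom_fold[OF tr'(1)]
    show ?thesis
      apply (simp only: Bt1_def Bt2_def Bt3_def Bt4_def power2_eq_square)
      apply (simp only: tr'(2-4)[symmetric])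
      apply (simp only: fo)
      apply (rule arg_cong[where f="\<Phi>"])
      apply algebra
      done
  qed
  have "2 * ((Bt1 N h y0) - (0)) = 0"
    unfolding cert using rel by simp
  moreover have "is_unit_ring (2::'a)" using QAlg[of 2] by simp
  ultimately show ?thesis using unit_cancel_left[of "2::'a" "(Bt1 N h y0) - (0)" 0] by simp
qed

lemma top_sum:
  fixes f :: "nat \<Rightarrow> 'a::comm_monoid_add"
  assumes "k \<le> n" and z: "\<And>j. j < n - k \<Longrightarrow> f j = 0"
  shows "(\<Sum>j=0..n. f j) = (\<Sum>t=0..k. f (n - t))"
proof -
  have "(\<Sum>j=0..n. f j) = (\<Sum>j=n-k..n. f j)"
    by (rule sum.mono_neutral_right) (auto simp: z)
  also have "\<dots> = (\<Sum>t=0..k. f (n - t))"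
    by (rule sum.reindex_bij_witness[of _ "\<lambda>t. n - t" "\<lambda>j. n - j"]) (use assms(1) in auto)
  finally show ?thesis .
qed

lemma sum3: "(\<Sum>t::nat=0..2. g t) = g 0 + g 1 + (g 2::'a::comm_monoid_add)"
  by (simp add: numeral_2_eq_2 sum.atLeast0_atMost_Suc)
lemma sum4: "(\<Sum>t::nat=0..3. g t) = g 0 + g 1 + g 2 + (g 3::'a::comm_monoid_add)"
  by (simp add: numeral_3_eq_3 numeral_2_eq_2 sum.atLeast0_atMost_Suc)
lemma sum5: "(\<Sum>t::nat=0..4. g t) = g 0 + g 1 + g 2 + g 3 + (g 4::'a::comm_monoid_add)"
proof -
  have "(4::nat) = Suc 3" by simp
  then show ?thesis by (simp only: sum.atLeast0_atMost_Suc sum4)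
qed

lemma rearr3:
  assumes "central p" "central q" "central r"
  shows "p * (q * x) * r = (q * (p * r)) * x"
proof -
  have "p * (q * x) * r = p * q * (x * r)" by (simp add: mult.assoc)
  also have "\<dots> = p * q * (r * x)" using assms(3) by (simp add: central_def)
  also have "\<dots> = (q * p) * r * x" using assms(1) by (simp add: central_def mult.assoc)
  finally show ?thesis by (simp add: mult.assoc)
qed

lemma pow_inv: assumes "lp * sg = (1::'a::ring_1)" shows "lp ^ k * sg ^ k = 1"
proof (induction k)
  case 0 then show ?case by simp
next
  case (Suc k)
  have "lp ^ Suc k * sg ^ Suc k = lp * (lp ^ k * sg ^ k) * sg"
    unfolding power_Suc[of lp] power_Suc2[of sg] by (simp only: mult.assoc)
  then show ?case using Suc assms by simp
qed

lemma binom_rel: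
  "2 * (n choose 2) = n * (n - 1)"
  "6 * (n choose 3) = n * (n - 1) * (n - 2)"
  "24 * (n choose 4) = n * (n - 1) * (n - 2) * (n - 3)"
proof -
  have a2: "\<And>m. 2 * (m choose 2) = m * (m - 1)"
    using binomial_absorption[of 1] by (simp add: numeral_2_eq_2)
  have a3: "\<And>m. 3 * (m choose 3) = m * ((m - 1) choose 2)"
    using binomial_absorption[of 2] by (simp add: numeral_3_eq_3 numeral_2_eq_2)
  have a4: "\<And>m. 4 * (m choose 4) = m * ((m - 1) choose 3)"
    using binomial_absorption[of 3] by (simp add: numeral_3_eq_3 eval_nat_numeral)
  show "2 * (n choose 2) = n * (n - 1)" by (rule a2)
  have b3: "\<And>m. 6 * (m choose 3) = m * (m - 1) * (m - 2)"
  proof -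
    fix m
    have "6 * (m choose 3) = 2 * (3 * (m choose 3))" by simp
    also have "\<dots> = m * (2 * ((m - 1) choose 2))" unfolding a3 by simp
    also have "\<dots> = m * ((m - 1) * (m - 1 - 1))" unfolding a2 ..
    also have "\<dots> = m * (m - 1) * (m - 2)" by (simp add: mult.assoc numeral_2_eq_2)
    finally show "6 * (m choose 3) = m * (m - 1) * (m - 2)" .
  qed
  show "6 * (n choose 3) = n * (n - 1) * (n - 2)" by (rule b3)
  have "24 * (n choose 4) = 6 * (4 * (n choose 4))" by simp
  also have "\<dots> = n * (6 * ((n - 1) choose 3))" unfolding a4 by simp
  also have "\<dots> = n * ((n - 1) * (n - 1 - 1) * (n - 1 - 2))" unfolding b3 ..
  also have "\<dots> = n * (n - 1) * (n - 2) * (n - 3)" by (simp add: mult.assoc numeral_2_eq_2 numeral_3_eq_3)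
  finally show "24 * (n choose 4) = n * (n - 1) * (n - 2) * (n - 3)" .
qed

theorem mainTheorem10:
  fixes Dr :: "'a::ring_1 \<Rightarrow> 'a" and lam :: "'a \<Rightarrow> 'a" and lp :: 'a
    and n :: nat and a :: "nat \<Rightarrow> 'a"
  assumes QAlg: "\<And>m::nat. m > 0 \<Longrightarrow> is_unit_ring (of_nat m :: 'a)"
    and Der: "is_derivation Dr"
    and Aut: "is_ring_automorphism lam"
    and unit_lp: "is_unit_ring lp"
    and central_lp: "\<And>j. central ((Dr ^^ j) lp)"
    and chain: "\<And>x. Dr (lam x) = lp * lam (Dr x)"
    and a0: "a 0 = 1"
    and n2: "n \<ge> 2"
  shows
   "(let l2 = Dr lp; l3 = Dr (Dr lp); S = schwarzian Dr lp;
         I = wilczynski Dr n (op_L n a);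
         Il = wilczynski Dr n (op_Lhat Dr lam lp n a)
     in Il 2 = lp ^ 2 * lam (I 2) + of_nat (n + 1) * rinv (of_nat 6) * S
      \<and> (n \<ge> 3 \<longrightarrow>
          Il 3 = lp ^ 3 * lam (I 3) + of_nat 3 * lp * l2 * lam (I 2)
                 + of_nat (n + 1) * rinv (of_nat 4) * Dr S)
      \<and> (n \<ge> 4 \<longrightarrow>
          Il 4 = lp ^ 4 * lam (I 4) + of_nat 6 * lp ^ 2 * l2 * lam (I 3)
                 + (of_nat (n + 5) * lp * l3
                    - of_nat 3 * rinv (of_nat 2) * of_nat (n - 1) * l2 ^ 2) * lam (I 2)
                 + of_nat 3 * of_nat (n + 1) * rinv (of_nat 10) * Dr (Dr S)
                 + of_nat (n + 1) * of_nat (5 * n + 7) * rinv (of_nat 60) * S ^ 2))"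
proof -
  note dr = der_rules[OF Der]
  have ladd: "\<And>x y. lam (x + y) = lam x + lam y" and lmul: "\<And>x y. lam (x * y) = lam x * lam y"
    and l1: "lam 1 = 1" using Aut unfolding is_ring_automorphism_def by auto
  have l0: "lam 0 = 0" using ladd[of 0 0] by simp
  have lnat: "lam (of_nat k) = of_nat k" for k by (induct k) (simp_all add: l0 l1 ladd)
  have n1: "n \<ge> 1" using n2 by simp
  have clp: "central lp" using central_lp[of 0] by simp
  define sg where "sg = rinv lp"
  have sl: "sg * lp = 1" "lp * sg = 1" using rinv_unit[OF unit_lp] by (simp_all add: sg_def)
  have csg: "central sg" unfolding sg_def by (rule central_rinv[OF clp unit_lp])
  have cd1: "central (Dr lp)" using central_lp[of 1] by simp
  have cd2: "central (Dr (Dr lp))" using central_lp[of 2] by (simp add: numeral_2_eq_2)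
  define y0 where "y0 = Dr lp * rinv lp"
  define y1 where "y1 = Dr y0"
  define y2 where "y2 = Dr y1"
  define y3 where "y3 = Dr y2"
  have cy0: "central y0" unfolding y0_def using cd1 csg by (simp add: sg_def)
  have cy1: "central y1" unfolding y1_def by (rule der_central[OF Der cy0])
  have cy2: "central y2" unfolding y2_def by (rule der_central[OF Der cy1])
  have cy3: "central y3" unfolding y3_def by (rule der_central[OF Der cy2])
  have dsg: "Dr sg = - (sg * y0)"
  proof -
    have "Dr (sg * lp) = 0" using sl by (simp add: dr)
    then have e: "Dr sg * lp = - (sg * Dr lp)" by (simp add: dr eq_neg_iff_add_eq_0)
    have "Dr sg = Dr sg * (lp * sg)" using sl by simp
    also have "\<dots> = (Dr sg * lp) * sg" by (simp add: mult.assoc)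
    also have "\<dots> = - (sg * (Dr lp * sg))" by (simp add: e mult.assoc)
    finally show ?thesis by (simp add: y0_def sg_def)
  qed
  have l2y: "Dr lp = y0 * lp"
    unfolding y0_def sg_def[symmetric] by (simp add: mult.assoc sl)
  have d2s: "Dr (Dr lp) * rinv lp = y1 + y0 * y0"
  proof -
    have "y1 = Dr (Dr lp) * sg + Dr lp * Dr sg" by (simp add: y1_def y0_def sg_def[symmetric] dr)
    also have "Dr lp * Dr sg = - ((Dr lp * sg) * y0)" by (simp add: dsg mult.assoc)
    finally show ?thesis by (simp add: y0_def sg_def[symmetric])
  qed
  have l3y: "Dr (Dr lp) = (y1 + y0 * y0) * lp"
  proof -
    have "Dr (Dr lp) = Dr (Dr lp) * (sg * lp)" using sl by simp
    also have "\<dots> = (y1 + y0 * y0) * lp" using d2s by (simp add: mult.assoc[symmetric] sg_def)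
    finally show ?thesis .
  qed
  have l3y': "Dr (y0 * lp) = (y1 + y0 * y0) * lp" using l3y l2y by simp
  have uN: "\<And>m. m > 0 \<Longrightarrow> is_unit_ring (of_nat m :: 'a)" by (rule QAlg)
  define N where "N = (of_nat n :: 'a)"
  have cN: "central N" by (simp add: N_def)
  define r2 where "r2 = rinv (of_nat 2 :: 'a)"
  define r4 where "r4 = rinv (of_nat 4 :: 'a)"
  define r6 where "r6 = rinv (of_nat 6 :: 'a)"
  define r10 where "r10 = rinv (of_nat 10 :: 'a)"
  define r60 where "r60 = rinv (of_nat 60 :: 'a)"
  have rr: "2 * r2 = 1" "4 * r4 = 1" "6 * r6 = 1" "10 * r10 = 1" "60 * r60 = 1"
    unfolding r2_def r4_def r6_def r10_def r60_def
    using rinv_unit(1)[OF uN[of 2]] rinv_unit(1)[OF uN[of 4]] rinv_unit(1)[OF uN[of 6]]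
      rinv_unit(1)[OF uN[of 10]] rinv_unit(1)[OF uN[of 60]] by simp_all
  have cr: "central r2" "central r4" "central r6" "central r10" "central r60"
    unfolding r2_def r4_def r6_def r10_def r60_def
    by (rule central_rinv[OF central_of_nat uN], simp)+
  have u2: "is_unit_ring (2::'a)" using uN[of 2] by simp
  have dr2: "Dr r2 = 0"
  proof -
    have "2 * Dr r2 = Dr (2 * r2)" by (simp add: dr)
    also have "\<dots> = 0" using rr(1) by (simp add: dr)
    finally show ?thesis using unit_cancel_left[OF u2, of "Dr r2" 0] by simp
  qed
  define h where "h = (N - 1) * r2"
  have ch: "central h" using cN cr by (simp add: h_def)
  have dh: "Dr h = 0" by (simp add: h_def dr dr2 N_def)
  have h2: "2 * h = N - 1"
  proof -
    have "2 * h = (N - 1) * (2 * r2)" unfolding h_def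
      by (metis central_comm central_numeral mult.assoc)
    then show ?thesis using rr(1) by simp
  qed
  define b where "b = a 1"
  define P where "P j = op_pow1 Dr 1 b j" for j
  have X0: "Dr 0 = 0" by (rule dr(3))
  have P1: "\<And>j. P j j = 1" unfolding P_def using op_pow1_top[where X=Dr, OF X0, of 1 b] by simp
  have P0: "\<And>j m. j < m \<Longrightarrow> P j m = 0" unfolding P_def by (rule op_pow1_above[where X=Dr, OF X0])
  have Lsupp: "\<forall>m>n. op_L n a m = 0" by (simp add: op_L_def)
  obtain c where c: "\<And>m. op_L n a m = (\<Sum>j=0..n. c j * P j m)"
    using basis_exists[where P=P, OF P1 P0 Lsupp] by blast
  have cn: "c n = 1"
  proof -
    have "op_L n a n = (\<Sum>j=0..n. c j * P j n)" by (rule c)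
    also have "\<dots> = c n"
    proof -
      have z1: "(\<Sum>j=0..n-2. c j * P j n) = 0" by (rule sum.neutral) (use n2 P0 in auto)
      have z2: "P (n - 1) n = 0" using P0 n1 by simp
      show ?thesis using sum_top2[OF n2, of "\<lambda>j. c j * P j n"] z1 z2 P1 by simp
    qed
    finally show ?thesis by (simp add: op_L_def a0)
  qed
  have cn1: "c (n - 1) = 0"
  proof -
    have Pn: "P n (n - 1) = N * b"
      using op_pow1_sub1[OF Der, of b "n - 1"] n1 unfolding P_def N_def by (simp add: Suc_diff_1)
    have "op_L n a (n - 1) = (\<Sum>j=0..n. c j * P j (n - 1))" by (rule c)
    also have "\<dots> = c (n - 1) + N * b"
    proof -
      have z1: "(\<Sum>j=0..n-2. c j * P j (n - 1)) = 0" by (rule sum.neutral) (use n2 P0 in auto)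
      show ?thesis using sum_top2[OF n2, of "\<lambda>j. c j * P j (n - 1)"] z1 P1 Pn cn by simp
    qed
    finally have "op_L n a (n - 1) = c (n - 1) + N * b" .
    moreover have "op_L n a (n - 1) = N * b" using n1 by (simp add: op_L_def N_def b_def)
    ultimately show ?thesis by simp
  qed
  define I where "I = wilczynski Dr n (op_L n a)"
  have Iform: "\<And>k. k \<in> {2..n} \<Longrightarrow> I k = rinv (of_nat (n choose k)) * c (n - k)"
    unfolding I_def by (rule wilcz_from_c[OF QAlg Der n2 c[unfolded P_def] cn cn1])
  have uC: "\<And>k. k \<le> n \<Longrightarrow> is_unit_ring (of_nat (n choose k) :: 'a)" using uN by simp
  have cI: "\<And>t. t \<in> {2..n} \<Longrightarrow> c (n - t) = of_nat (n choose t) * I t"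
    using Iform uC by (simp add: rinv_mult_cancel)
  define beta where "beta = lam b"
  define bq where "bq = lp * beta - h * y0"
  define g where "g = h * sg * y0"
  define R where "R = op_pow1 (\<lambda>x. Dr x + bq * x - x * bq) sg g"
  have be: "sg * bq + g = beta"
  proof -
    have "sg * (h * y0) = h * sg * y0" using central_comm[OF ch, of sg] by (simp add: mult.assoc[symmetric])
    then show ?thesis unfolding bq_def g_def
      by (simp add: right_diff_distrib mult.assoc[symmetric] sl)
  qed
  have chain': "\<And>x. sg * Dr (lam x) = lam (Dr x)"
    by (simp add: chain mult.assoc[symmetric] sl)
  have Lhat1: "\<And>m. op_Lhat Dr lam lp n a m = lp ^ n * PhiN Dr lam sg n (op_L n a) m"
  proof -
    fix m
    have "PhiN Dr lam sg n (op_L n a) m = (\<Sum>i=0..n. of_nat (n choose (n - i)) * lam (a (n - i)) * op_pow1 Dr sg 0 i m)"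
      unfolding PhiN_def by (rule sum.cong) (simp_all add: op_L_def lmul lnat)
    also have "\<dots> = (\<Sum>i=0..n. of_nat (n choose i) * lam (a i) * op_pow1 Dr sg 0 (n - i) m)"
      using sum.atLeastAtMost_rev[of "\<lambda>i. of_nat (n choose (n - i)) * lam (a (n - i)) * op_pow1 Dr sg 0 i m" 0 n]
      by simp
    finally have e: "PhiN Dr lam sg n (op_L n a) m = (\<Sum>i=0..n. of_nat (n choose i) * lam (a i) * op_pow1 Dr sg 0 (n - i) m)" .
    show "op_Lhat Dr lam lp n a m = lp ^ n * PhiN Dr lam sg n (op_L n a) m"
      unfolding e op_Lhat_def sg_def[symmetric] by (simp add: sum_distrib_left mult.assoc)
  qed
  have PhiL: "\<And>m. PhiN Dr lam sg n (op_L n a) m = (\<Sum>j=0..n. lam (c j) * op_pow1 Dr sg beta j m)"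
  proof -
    fix m
    have "op_L n a = (\<lambda>i. \<Sum>j=0..n. c j * P j i)" using c by (simp add: fun_eq_iff)
    then have "PhiN Dr lam sg n (op_L n a) m = (\<Sum>j=0..n. lam (c j) * PhiN Dr lam sg n (P j) m)"
      by (simp add: Phi_lin[OF ladd lmul l0])
    also have "\<dots> = (\<Sum>j=0..n. lam (c j) * op_pow1 Dr sg beta j m)"
      by (rule sum.cong) (simp_all add: P_def beta_def Phi_pow[OF Der ladd lmul l0 l1 csg chain' n1])
    finally show "PhiN Dr lam sg n (op_L n a) m = (\<Sum>j=0..n. lam (c j) * op_pow1 Dr sg beta j m)" .
  qed
  have TR: "\<And>j m. j \<le> n \<Longrightarrow> op_pow1 Dr sg beta j m = TN Dr bq n (R j) m"
    unfolding R_def using T_pow[OF Der n1 be] by simp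
  define Q2 where "Q2 i = (\<Sum>j=0..n. lp ^ n * lam (c j) * R j i)" for i
  have Lhat2: "\<And>m. op_Lhat Dr lam lp n a m = (\<Sum>i=0..n. Q2 i * op_pow1 Dr 1 bq i m)"
  proof -
    fix m
    have "op_Lhat Dr lam lp n a m = (\<Sum>j=0..n. (lp ^ n * lam (c j)) * TN Dr bq n (R j) m)"
      unfolding Lhat1 PhiL by (simp add: sum_distrib_left mult.assoc TR)
    also have "\<dots> = TN Dr bq n (\<lambda>i. \<Sum>j=0..n. (lp ^ n * lam (c j)) * R j i) m"
      by (rule T_lin[symmetric])
    also have "\<dots> = (\<Sum>i=0..n. Q2 i * op_pow1 Dr 1 bq i m)"
      unfolding TN_def Q2_def by simp
    finally show "op_Lhat Dr lam lp n a m = (\<Sum>i=0..n. Q2 i * op_pow1 Dr 1 bq i m)" .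
  qed
  have dyy: "Dr y0 = y1" "Dr y1 = y2" "Dr y2 = y3" by (simp_all add: y1_def y2_def y3_def)
  note RC = R_closed[OF QAlg Der csg ch cy0 cy1 cy2 cy3 dh dsg dyy g_def R_def]
  have X0': "(\<lambda>x. Dr x + bq * x - x * bq) 0 = 0" by (simp add: dr)
  have Rabove: "\<And>j m. j < m \<Longrightarrow> R j m = 0"
    unfolding R_def by (rule op_pow1_above[where X="\<lambda>x. Dr x + bq * x - x * bq", OF X0'])
  have u24: "is_unit_ring (24::'a)" and u48: "is_unit_ring (48::'a)" and u5760: "is_unit_ring (5760::'a)"
    using uN[of 24] uN[of 48] uN[of 5760] by simp_all
  have lpsg: "\<And>t. t \<le> n \<Longrightarrow> lp ^ n * sg ^ (n - t) = lp ^ t"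
  proof -
    fix t :: nat assume t: "t \<le> n"
    have "lp ^ n = lp ^ t * lp ^ (n - t)" using t by (simp add: power_add[symmetric])
    then show "lp ^ n * sg ^ (n - t) = lp ^ t" using pow_inv[OF sl(2), of "n - t"] by (simp add: mult.assoc)
  qed
  have transf: "\<And>M R' j B. central (M::'a) \<Longrightarrow> M * R' = sg ^ j * B \<Longrightarrow> M * (lp ^ n * R') = (lp ^ n * sg ^ j) * B"
  proof -
    fix M R' j B assume cM: "central (M::'a)" and e: "M * R' = sg ^ j * B"
    have "M * (lp ^ n * R') = lp ^ n * (M * R')"
      by (metis cM central_comm mult.assoc)
    then show "M * (lp ^ n * R') = (lp ^ n * sg ^ j) * B" by (simp add: e mult.assoc)
  qed
  have Q2n: "Q2 n = 1"
  proof -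
    have "Q2 n = (\<Sum>t=0..0. lp ^ n * lam (c (n - t)) * R (n - t) n)"
      unfolding Q2_def by (rule top_sum) (auto simp: Rabove)
    also have "\<dots> = lp ^ n * sg ^ n" using RC[of n] by (simp add: cn l1)
    also have "\<dots> = 1" by (rule pow_inv[OF sl(2)])
    finally show ?thesis .
  qed
  have Q2n1: "Q2 (n - 1) = 0"
  proof -
    have "Q2 (n - 1) = (\<Sum>t=0..1. lp ^ n * lam (c (n - t)) * R (n - t) (n - 1))"
      unfolding Q2_def by (rule top_sum) (use n1 in \<open>auto simp: Rabove\<close>)
    also have "\<dots> = lp ^ n * R n (n - 1)" using cn1 l0 by (simp add: cn l1)
    also have "R n (n - 1) = 0"
    proof -
      have "2 * R n (n - 1) = sg ^ n * Bt1 N h y0" using RC[of n] n1 by (simp add: N_def)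
      also have "Bt1 N h y0 = 0" by (rule K1z[OF QAlg cN ch cy0 h2])
      finally have "2 * R n (n - 1) = 2 * 0" by simp
      then show ?thesis using unit_cancel_left[OF u2] by blast
    qed
    finally show ?thesis by simp
  qed
  define Il where "Il = wilczynski Dr n (op_Lhat Dr lam lp n a)"
  have Ilform: "\<And>k. k \<in> {2..n} \<Longrightarrow> Il k = rinv (of_nat (n choose k)) * Q2 (n - k)"
    unfolding Il_def by (rule wilcz_from_c[OF QAlg Der n2 Lhat2 Q2n Q2n1])
  have Qk: "\<And>k. k \<le> n \<Longrightarrow> Q2 (n - k) = (\<Sum>t=0..k. lp ^ n * lam (c (n - t)) * R (n - t) (n - k))"
    unfolding Q2_def by (rule top_sum) (auto simp: Rabove)
  have f0: "\<And>k. lp ^ n * lam (c (n - 0)) * R (n - 0) (n - k) = lp ^ n * R n (n - k)"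
    by (simp add: cn l1)
  have f1: "\<And>k. lp ^ n * lam (c (n - 1)) * R (n - 1) (n - k) = 0"
    using cn1 l0 by simp
  have ft: "\<And>t k. t \<in> {2..n} \<Longrightarrow> central (R (n - t) (n - k)) \<Longrightarrow>
      lp ^ n * lam (c (n - t)) * R (n - t) (n - k) = (of_nat (n choose t) * (lp ^ n * R (n - t) (n - k))) * lam (I t)"
  proof -
    fix t k assume t: "t \<in> {2..n}" and cR: "central (R (n - t) (n - k))"
    have "lam (c (n - t)) = of_nat (n choose t) * lam (I t)" using cI[OF t] by (simp add: lmul lnat)
    then show "lp ^ n * lam (c (n - t)) * R (n - t) (n - k) = (of_nat (n choose t) * (lp ^ n * R (n - t) (n - k))) * lam (I t)"
      using rearr3[of "lp ^ n" "of_nat (n choose t)" "R (n - t) (n - k)" "lam (I t)"] clp cR by simp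
  qed
  have lpR: "\<And>k. k \<le> n \<Longrightarrow> lp ^ n * R (n - k) (n - k) = lp ^ k"
    using RC lpsg by simp
  have cRtop: "\<And>k. central (R (n - k) (n - k))" using RC csg by simp
  define S' where "S' = (y1 + y0 * y0) - 3 * r2 * y0 ^ 2"
  have Sform: "schwarzian Dr lp = S'"
    unfolding schwarzian_def S'_def d2s y0_def[symmetric] r2_def[symmetric] by simp
  have nm1: "(of_nat (n - 1)::'a) = N - 1" using n1 by (simp add: N_def of_nat_diff)
  have nm2: "(of_nat (n - 2)::'a) = N - 2" using n2 by (simp add: N_def of_nat_diff)
  define C2 where "C2 = (of_nat (n choose 2) :: 'a)"
  have cC2: "central C2" by (simp add: C2_def)
  have uC2: "is_unit_ring C2" unfolding C2_def using uC n2 by simp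
  have relC2: "2 * C2 = N * (N - 1)"
  proof -
    have "(2::'a) * C2 = of_nat (2 * (n choose 2))" by (simp add: C2_def)
    also have "\<dots> = of_nat (n * (n - 1))" by (simp only: binom_rel(1))
    also have "\<dots> = N * (N - 1)" by (simp only: of_nat_mult nm1 N_def)
    finally show ?thesis .
  qed
  define X2 where "X2 = lp ^ n * R n (n - 2)"
  have relX2: "24 * X2 = Bt2 N h y0 y1"
  proof -
    have "24 * R n (n - 2) = sg ^ n * Bt2 N h y0 y1" using RC[of n] n2 by (simp add: N_def)
    from transf[OF _ this] have "24 * X2 = (lp ^ n * sg ^ n) * Bt2 N h y0 y1" by (simp add: X2_def)
    then show ?thesis using pow_inv[OF sl(2), of n] by simp
  qed
  have cX2: "central X2"
    by (rule central_of_unit_mult[OF u24 _ relX2]) (simp_all add: Bt2_central cN ch cy0 cy1)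
  have t2: "2 \<in> {2..n}" using n2 by simp
  have Q22: "Q2 (n - 2) = X2 + (C2 * lp ^ 2) * lam (I 2)"
  proof -
    have "Q2 (n - 2) = (\<Sum>t=0..2. lp ^ n * lam (c (n - t)) * R (n - t) (n - 2))" by (rule Qk[OF n2])
    also have "\<dots> = lp ^ n * lam (c (n - 0)) * R (n - 0) (n - 2) + lp ^ n * lam (c (n - 1)) * R (n - 1) (n - 2)
        + lp ^ n * lam (c (n - 2)) * R (n - 2) (n - 2)" by (rule sum3)
    also have "\<dots> = lp ^ n * R n (n - 2) + 0 + (of_nat (n choose 2) * (lp ^ n * R (n - 2) (n - 2))) * lam (I 2)"
      by (simp only: f0 f1 ft[OF t2 cRtop])
    also have "\<dots> = X2 + (C2 * lp ^ 2) * lam (I 2)" by (simp add: lpR[OF n2] X2_def C2_def)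
    finally show ?thesis .
  qed
  have G2: "Il 2 = lp ^ 2 * lam (I 2) + of_nat (n + 1) * rinv (of_nat 6) * schwarzian Dr lp"
  proof -
    have k: "C2 * ((N + 1) * r6 * ((y1 + y0 * y0) - 3 * r2 * y0 ^ 2)) = X2"
      by (rule K2c[OF QAlg cC2 cX2 cN ch cy0 cy1 cr(1) cr(3) relX2 relC2 rr(3) rr(1) h2])
    have "Il 2 = rinv C2 * (X2 + (C2 * lp ^ 2) * lam (I 2))" using Ilform[OF t2] Q22 by (simp add: C2_def)
    also have "\<dots> = rinv C2 * X2 + (rinv C2 * (C2 * lp ^ 2)) * lam (I 2)"
      by (simp add: distrib_left mult.assoc)
    also have "\<dots> = (N + 1) * r6 * S' + lp ^ 2 * lam (I 2)"
      using k[symmetric] by (simp add: rinv_mult_cancel2[OF uC2] S'_def)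
    finally show ?thesis by (simp add: Sform N_def r6_def add.commute)
  qed
  have np1: "(of_nat (n + 1)::'a) = N + 1" by (simp add: N_def)
  have rn: "rinv (2::'a) = r2" "rinv (4::'a) = r4" "rinv (6::'a) = r6" "rinv (10::'a) = r10" "rinv (60::'a) = r60"
    by (simp_all add: r2_def r4_def r6_def r10_def r60_def)
  have np5: "(of_nat (n + 5)::'a) = N + 5" by (simp add: N_def)
  have n57: "(of_nat (5 * n + 7)::'a) = 5 * N + 7" by (simp add: N_def)
  have G3: "n \<ge> 3 \<Longrightarrow> Il 3 = lp ^ 3 * lam (I 3) + of_nat 3 * lp * Dr lp * lam (I 2)
                 + of_nat (n + 1) * rinv (of_nat 4) * Dr (schwarzian Dr lp)"
  proof -
    assume n3: "n \<ge> 3"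
    have nm3: "(of_nat (n - 3)::'a) = N - 3" using n3 by (simp add: N_def of_nat_diff)
    define C3 where "C3 = (of_nat (n choose 3) :: 'a)"
    have cC3: "central C3" by (simp add: C3_def)
    have uC3: "is_unit_ring C3" unfolding C3_def using uC n3 by simp
    have relC3: "6 * C3 = N * (N - 1) * (N - 2)"
    proof -
      have "(6::'a) * C3 = of_nat (6 * (n choose 3))" by (simp add: C3_def)
      also have "\<dots> = of_nat (n * (n - 1) * (n - 2))" by (simp only: binom_rel(2))
      also have "\<dots> = N * (N - 1) * (N - 2)" by (simp only: of_nat_mult nm1 nm2 N_def)
      finally show ?thesis .
    qed
    define X3 where "X3 = lp ^ n * R n (n - 3)"
    have relX3: "48 * X3 = Bt3 N h y0 y1 y2"
    proof -
      have "48 * R n (n - 3) = sg ^ n * Bt3 N h y0 y1 y2" using RC[of n] n3 by (simp add: N_def)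
      from transf[OF _ this] have "48 * X3 = (lp ^ n * sg ^ n) * Bt3 N h y0 y1 y2" by (simp add: X3_def)
      then show ?thesis using pow_inv[OF sl(2), of n] by simp
    qed
    have cX3: "central X3"
      by (rule central_of_unit_mult[OF u48 _ relX3]) (simp_all add: Bt3_central cN ch cy0 cy1 cy2)
    define Z where "Z = lp ^ n * R (n - 2) (n - 3)"
    have eZ: "2 * R (n - 2) (n - 3) = sg ^ (n - 2) * Bt1 (N - 2) h y0"
    proof -
      have "n - 2 - 1 = n - 3" by simp
      then show ?thesis using RC[of "n - 2"] n3 nm2 by simp
    qed
    have cRZ: "central (R (n - 2) (n - 3))"
      by (rule central_of_unit_mult[OF u2 _ eZ]) (simp_all add: Bt1_central cN ch cy0 csg)
    have relZ: "2 * Z = lp ^ 2 * Bt1 (N - 2) h y0"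
      using transf[OF _ eZ] lpsg[of 2] n3 by (simp add: Z_def)
    have cZ: "central Z" by (simp add: Z_def clp cRZ)
    have t3: "3 \<in> {2..n}" using n3 by simp
    have Q23: "Q2 (n - 3) = X3 + (C2 * Z) * lam (I 2) + (C3 * lp ^ 3) * lam (I 3)"
    proof -
      have "Q2 (n - 3) = (\<Sum>t=0..3. lp ^ n * lam (c (n - t)) * R (n - t) (n - 3))" by (rule Qk[OF n3])
      also have "\<dots> = lp ^ n * lam (c (n - 0)) * R (n - 0) (n - 3) + lp ^ n * lam (c (n - 1)) * R (n - 1) (n - 3)
          + lp ^ n * lam (c (n - 2)) * R (n - 2) (n - 3) + lp ^ n * lam (c (n - 3)) * R (n - 3) (n - 3)" by (rule sum4)
      also have "\<dots> = lp ^ n * R n (n - 3) + 0 + (of_nat (n choose 2) * (lp ^ n * R (n - 2) (n - 3))) * lam (I 2)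
          + (of_nat (n choose 3) * (lp ^ n * R (n - 3) (n - 3))) * lam (I 3)"
        by (simp only: f0 f1 ft[OF t2 cRZ] ft[OF t3 cRtop])
      also have "\<dots> = X3 + (C2 * Z) * lam (I 2) + (C3 * lp ^ 3) * lam (I 3)"
        by (simp add: lpR[OF n3] X3_def C2_def C3_def Z_def)
      finally show ?thesis .
    qed
    have k1: "C3 * ((N + 1) * r4 * Dr ((y1 + y0 * y0) - 3 * r2 * y0 ^ 2)) = X3"
      by (rule K3c[OF QAlg cC3 cX3 cN ch cy0 cy1 cy2 cr(1) cr(2) relX3 relC3 rr(2) rr(1) h2 Der dyy(1) dyy(2) dyy(3) dr2])
    have k2: "C3 * (3 * lp * (y0 * lp)) = C2 * Z"
      by (rule K32[OF QAlg cC2 cC3 cZ cN ch cy0 clp relZ relC3 relC2 h2])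
    have "Il 3 = rinv C3 * (X3 + (C2 * Z) * lam (I 2) + (C3 * lp ^ 3) * lam (I 3))"
      using Ilform[OF t3] Q23 by (simp add: C3_def)
    also have "\<dots> = rinv C3 * X3 + (rinv C3 * (C2 * Z)) * lam (I 2) + (rinv C3 * (C3 * lp ^ 3)) * lam (I 3)"
      by (simp add: distrib_left mult.assoc)
    also have "\<dots> = (N + 1) * r4 * Dr S' + (3 * lp * (y0 * lp)) * lam (I 2) + lp ^ 3 * lam (I 3)"
      using k1[symmetric] k2[symmetric] by (simp add: rinv_mult_cancel2[OF uC3] S'_def)
    finally have e: "Il 3 = (N + 1) * r4 * Dr S' + (3 * lp * (y0 * lp)) * lam (I 2) + lp ^ 3 * lam (I 3)" .
    have "lp ^ 3 * lam (I 3) + of_nat 3 * lp * Dr lp * lam (I 2) + of_nat (n + 1) * rinv (of_nat 4) * Dr (schwarzian Dr lp)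
        = lp ^ 3 * lam (I 3) + (3 * lp * (y0 * lp)) * lam (I 2) + (N + 1) * r4 * Dr S'"
      by (simp only: of_nat_numeral np1 rn Sform l2y)
    then show ?thesis unfolding e by (simp only: add_ac)
  qed
  have G4: "n \<ge> 4 \<Longrightarrow> Il 4 = lp ^ 4 * lam (I 4) + of_nat 6 * lp ^ 2 * Dr lp * lam (I 3)
                 + (of_nat (n + 5) * lp * Dr (Dr lp)
                    - of_nat 3 * rinv (of_nat 2) * of_nat (n - 1) * Dr lp ^ 2) * lam (I 2)
                 + of_nat 3 * of_nat (n + 1) * rinv (of_nat 10) * Dr (Dr (schwarzian Dr lp))
                 + of_nat (n + 1) * of_nat (5 * n + 7) * rinv (of_nat 60) * schwarzian Dr lp ^ 2"
  proof -
    assume n4: "n \<ge> 4"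
    have n3: "n \<ge> 3" using n4 by simp
    have nm3: "(of_nat (n - 3)::'a) = N - 3" using n3 by (simp add: N_def of_nat_diff)
    define C3 where "C3 = (of_nat (n choose 3) :: 'a)"
    have cC3: "central C3" by (simp add: C3_def)
    have relC3: "6 * C3 = N * (N - 1) * (N - 2)"
    proof -
      have "(6::'a) * C3 = of_nat (6 * (n choose 3))" by (simp add: C3_def)
      also have "\<dots> = of_nat (n * (n - 1) * (n - 2))" by (simp only: binom_rel(2))
      also have "\<dots> = N * (N - 1) * (N - 2)" by (simp only: of_nat_mult nm1 nm2 N_def)
      finally show ?thesis .
    qed
    define C4 where "C4 = (of_nat (n choose 4) :: 'a)"
    have cC4: "central C4" by (simp add: C4_def)
    have uC4: "is_unit_ring C4" unfolding C4_def using uC n4 by simp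
    have relC4: "24 * C4 = N * (N - 1) * (N - 2) * (N - 3)"
    proof -
      have "(24::'a) * C4 = of_nat (24 * (n choose 4))" by (simp add: C4_def)
      also have "\<dots> = of_nat (n * (n - 1) * (n - 2) * (n - 3))" by (simp only: binom_rel(3))
      also have "\<dots> = N * (N - 1) * (N - 2) * (N - 3)" by (simp only: of_nat_mult nm1 nm2 nm3 N_def)
      finally show ?thesis .
    qed
    define X4 where "X4 = lp ^ n * R n (n - 4)"
    have relX4: "5760 * X4 = Bt4 N h y0 y1 y2 y3"
    proof -
      have "5760 * R n (n - 4) = sg ^ n * Bt4 N h y0 y1 y2 y3" using RC[of n] n4 by (simp add: N_def)
      from transf[OF _ this] have "5760 * X4 = (lp ^ n * sg ^ n) * Bt4 N h y0 y1 y2 y3" by (simp add: X4_def)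
      then show ?thesis using pow_inv[OF sl(2), of n] by simp
    qed
    have cX4: "central X4"
      by (rule central_of_unit_mult[OF u5760 _ relX4]) (simp_all add: Bt4_central cN ch cy0 cy1 cy2 cy3)
    define Z2 where "Z2 = lp ^ n * R (n - 2) (n - 4)"
    have eZ2: "24 * R (n - 2) (n - 4) = sg ^ (n - 2) * Bt2 (N - 2) h y0 y1"
    proof -
      have "n - 2 - 2 = n - 4" by simp
      then show ?thesis using RC[of "n - 2"] n4 nm2 by simp
    qed
    have cRZ2: "central (R (n - 2) (n - 4))"
      by (rule central_of_unit_mult[OF u24 _ eZ2]) (simp_all add: Bt2_central cN ch cy0 cy1 csg)
    have relZ2: "24 * Z2 = lp ^ 2 * Bt2 (N - 2) h y0 y1"
      using transf[OF _ eZ2] lpsg[of 2] n4 by (simp add: Z2_def)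
    have cZ2: "central Z2" by (simp add: Z2_def clp cRZ2)
    define Z3 where "Z3 = lp ^ n * R (n - 3) (n - 4)"
    have eZ3: "2 * R (n - 3) (n - 4) = sg ^ (n - 3) * Bt1 (N - 3) h y0"
    proof -
      have "n - 3 - 1 = n - 4" by simp
      then show ?thesis using RC[of "n - 3"] n4 nm3 by simp
    qed
    have cRZ3: "central (R (n - 3) (n - 4))"
      by (rule central_of_unit_mult[OF u2 _ eZ3]) (simp_all add: Bt1_central cN ch cy0 csg)
    have relZ3: "2 * Z3 = lp ^ 3 * Bt1 (N - 3) h y0"
      using transf[OF _ eZ3] lpsg[of 3] n4 by (simp add: Z3_def)
    have cZ3: "central Z3" by (simp add: Z3_def clp cRZ3)
    have t3: "3 \<in> {2..n}" and t4: "4 \<in> {2..n}" using n4 by simp_all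
    have Q24: "Q2 (n - 4) = X4 + (C2 * Z2) * lam (I 2) + (C3 * Z3) * lam (I 3) + (C4 * lp ^ 4) * lam (I 4)"
    proof -
      have "Q2 (n - 4) = (\<Sum>t=0..4. lp ^ n * lam (c (n - t)) * R (n - t) (n - 4))" by (rule Qk[OF n4])
      also have "\<dots> = lp ^ n * lam (c (n - 0)) * R (n - 0) (n - 4) + lp ^ n * lam (c (n - 1)) * R (n - 1) (n - 4)
          + lp ^ n * lam (c (n - 2)) * R (n - 2) (n - 4) + lp ^ n * lam (c (n - 3)) * R (n - 3) (n - 4)
          + lp ^ n * lam (c (n - 4)) * R (n - 4) (n - 4)" by (rule sum5)
      also have "\<dots> = lp ^ n * R n (n - 4) + 0 + (of_nat (n choose 2) * (lp ^ n * R (n - 2) (n - 4))) * lam (I 2)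
          + (of_nat (n choose 3) * (lp ^ n * R (n - 3) (n - 4))) * lam (I 3)
          + (of_nat (n choose 4) * (lp ^ n * R (n - 4) (n - 4))) * lam (I 4)"
        by (simp only: f0 f1 ft[OF t2 cRZ2] ft[OF t3 cRZ3] ft[OF t4 cRtop])
      also have "\<dots> = X4 + (C2 * Z2) * lam (I 2) + (C3 * Z3) * lam (I 3) + (C4 * lp ^ 4) * lam (I 4)"
        by (simp add: lpR[OF n4] X4_def C2_def C3_def C4_def Z2_def Z3_def)
      finally show ?thesis .
    qed
    have k1: "C4 * (3 * (N + 1) * r10 * Dr (Dr ((y1 + y0 * y0) - 3 * r2 * y0 ^ 2))
        + (N + 1) * (5 * N + 7) * r60 * ((y1 + y0 * y0) - 3 * r2 * y0 ^ 2) ^ 2) = X4"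
      by (rule K4c[OF QAlg cC4 cX4 cN ch cy0 cy1 cy2 cy3 cr(1) cr(4) cr(5) relX4 relC4 rr(4) rr(5) rr(1) h2
            Der dyy(1) dyy(2) dyy(3) dr2])
    have k2: "C4 * ((N + 5) * lp * ((y1 + y0 * y0) * lp) - 3 * r2 * (N - 1) * (y0 * lp) ^ 2) = C2 * Z2"
      by (rule K42[OF QAlg cC2 cC4 cZ2 cN ch cy0 cy1 clp cr(1) relZ2 relC4 relC2 rr(1) h2])
    have k3: "C4 * (6 * lp ^ 2 * (y0 * lp)) = C3 * Z3"
      by (rule K43[OF QAlg cC3 cC4 cZ3 cN ch cy0 clp relZ3 relC4 relC3 h2])
    have "Il 4 = rinv C4 * (X4 + (C2 * Z2) * lam (I 2) + (C3 * Z3) * lam (I 3) + (C4 * lp ^ 4) * lam (I 4))"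
      using Ilform[OF t4] Q24 by (simp add: C4_def)
    also have "\<dots> = rinv C4 * X4 + (rinv C4 * (C2 * Z2)) * lam (I 2) + (rinv C4 * (C3 * Z3)) * lam (I 3)
        + (rinv C4 * (C4 * lp ^ 4)) * lam (I 4)"
      by (simp add: distrib_left mult.assoc)
    also have "\<dots> = (3 * (N + 1) * r10 * Dr (Dr S') + (N + 1) * (5 * N + 7) * r60 * S' ^ 2)
        + ((N + 5) * lp * ((y1 + y0 * y0) * lp) - 3 * r2 * (N - 1) * (y0 * lp) ^ 2) * lam (I 2)
        + (6 * lp ^ 2 * (y0 * lp)) * lam (I 3) + lp ^ 4 * lam (I 4)"
      using k1[symmetric] k2[symmetric] k3[symmetric] by (simp only: rinv_mult_cancel2[OF uC4] S'_def)
    finally have e: "Il 4 = (3 * (N + 1) * r10 * Dr (Dr S') + (N + 1) * (5 * N + 7) * r60 * S' ^ 2)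
        + ((N + 5) * lp * ((y1 + y0 * y0) * lp) - 3 * r2 * (N - 1) * (y0 * lp) ^ 2) * lam (I 2)
        + (6 * lp ^ 2 * (y0 * lp)) * lam (I 3) + lp ^ 4 * lam (I 4)" .
    have "lp ^ 4 * lam (I 4) + of_nat 6 * lp ^ 2 * Dr lp * lam (I 3)
                 + (of_nat (n + 5) * lp * Dr (Dr lp)
                    - of_nat 3 * rinv (of_nat 2) * of_nat (n - 1) * Dr lp ^ 2) * lam (I 2)
                 + of_nat 3 * of_nat (n + 1) * rinv (of_nat 10) * Dr (Dr (schwarzian Dr lp))
                 + of_nat (n + 1) * of_nat (5 * n + 7) * rinv (of_nat 60) * schwarzian Dr lp ^ 2
        = lp ^ 4 * lam (I 4) + (6 * lp ^ 2 * (y0 * lp)) * lam (I 3)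
          + ((N + 5) * lp * ((y1 + y0 * y0) * lp) - 3 * r2 * (N - 1) * (y0 * lp) ^ 2) * lam (I 2)
          + 3 * (N + 1) * r10 * Dr (Dr S') + (N + 1) * (5 * N + 7) * r60 * S' ^ 2"
      by (simp only: nm1 np1 np5 n57 of_nat_numeral rn Sform l3y' l2y)
    then show ?thesis unfolding e by (simp only: add_ac)
  qed
  show ?thesis
    unfolding Let_def Il_def[symmetric] I_def[symmetric] using G2 G3 G4 by blast
qed

end
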